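(* Let $n\ge 3$ be an integer. Every finite simple edge-pancyclic graph of order $n$ with at least one edge has diameter at most $\lfloor 2n/5\rfloor$. Moreover, there exists a finite simple edge-pancyclic graph of order $n$ with diameter exactly $\lfloor 2n/5\rfloor$. Hence the maximum diameter of an edge-pancyclic graph of order $n$ is $\lfloor 2n/5\rfloor$.
   Context: A $k$-cycle is a cycle of length $k$. A graph $G$ of order $n$ is edge-pancyclic if for every integer $k$ with $3\le k\le n$, every edge of $G$ lies in a $k$-cycle. If such a graph has an edge, that edge lies in a Hamilton cycle, so the graph is connected and its diameter is finite. *)

theory Defs
  imports Main "HOL-Library.Extended_Nat"
begin

definition simple_graph :: "'a set \<Rightarrow> ('a \<Rightarrow> 'a \<Rightarrow> bool) \<Rightarrow> bool" where
  "simple_graph V E \<longleftrightarrow> finite V \<and>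
     (\<forall>u v. E u v \<longrightarrow> u \<in> V \<and> v \<in> V \<and> u \<noteq> v \<and> E v u)"

definition is_cycle :: "'a set \<Rightarrow> ('a \<Rightarrow> 'a \<Rightarrow> bool) \<Rightarrow> 'a list \<Rightarrow> bool" where
  "is_cycle V E cs \<longleftrightarrow> length cs \<ge> 3 \<and> distinct cs \<and> set cs \<subseteq> V \<and>
     (\<forall>i < length cs. E (cs ! i) (cs ! ((i + 1) mod length cs)))"

definition edge_on_cycle :: "'a \<Rightarrow> 'a \<Rightarrow> 'a list \<Rightarrow> bool" where
  "edge_on_cycle u v cs \<longleftrightarrow>
     (\<exists>i < length cs. {cs ! i, cs ! ((i + 1) mod length cs)} = {u, v})"

definition edge_pancyclic :: "'a set \<Rightarrow> ('a \<Rightarrow> 'a \<Rightarrow> bool) \<Rightarrow> bool" where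
  "edge_pancyclic V E \<longleftrightarrow>
     (\<forall>k. 3 \<le> k \<and> k \<le> card V \<longrightarrow>
        (\<forall>u v. E u v \<longrightarrow> (\<exists>cs. is_cycle V E cs \<and> length cs = k \<and> edge_on_cycle u v cs)))"

definition walk :: "'a set \<Rightarrow> ('a \<Rightarrow> 'a \<Rightarrow> bool) \<Rightarrow> 'a list \<Rightarrow> bool" where
  "walk V E xs \<longleftrightarrow> xs \<noteq> [] \<and> set xs \<subseteq> V \<and>
     (\<forall>i. i + 1 < length xs \<longrightarrow> E (xs ! i) (xs ! (i + 1)))"

text \<open>Distance (\<infinity> if no walk), and diameter = supremum of distances.\<close>
definition gdist :: "'a set \<Rightarrow> ('a \<Rightarrow> 'a \<Rightarrow> bool) \<Rightarrow> 'a \<Rightarrow> 'a \<Rightarrow> enat" where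
  "gdist V E u v = (INF xs \<in> {xs. walk V E xs \<and> hd xs = u \<and> last xs = v}. enat (length xs - 1))"

definition diameter :: "'a set \<Rightarrow> ('a \<Rightarrow> 'a \<Rightarrow> bool) \<Rightarrow> enat" where
  "diameter V E = (SUP u \<in> V. SUP v \<in> V. gdist V E u v)"

end

theory Submission
  imports Defs "HOL-Library.Nat_Bijection"
begin

lemma gdist_le:
  assumes "walk V E xs" "hd xs = u" "last xs = v"
  shows "gdist V E u v \<le> enat (length xs - 1)"
  unfolding gdist_def using assms by (auto intro: INF_lower2)

lemma gdist_attained:
  assumes "gdist V E u v = enat m"
  shows "\<exists>xs. walk V E xs \<and> hd xs = u \<and> last xs = v \<and> length xs = Suc m"
proof -
  let ?S = "{xs. walk V E xs \<and> hd xs = u \<and> last xs = v}"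
  let ?A = "(\<lambda>xs. enat (length xs - 1)) ` ?S"
  have ne: "?A \<noteq> {}"
  proof
    assume "?A = {}"
    then have e: "?S = {}" by blast
    have "gdist V E u v = (INF xs\<in>({}::'a list set). enat (length xs - 1))" unfolding gdist_def e ..
    then have "gdist V E u v = \<infinity>" by (simp add: top_enat_def)
    with assms show False by simp
  qed
  have "Inf ?A \<in> ?A" using ne unfolding Inf_enat_def by (auto intro: LeastI)
  then obtain xs where xs: "xs \<in> ?S" "enat (length xs - 1) = enat m"
    using assms unfolding gdist_def by auto
  then have "xs \<noteq> []" by (auto simp: walk_def)
  with xs show ?thesis by (intro exI[of _ xs]) auto
qed

lemma gdist_self:
  assumes "x \<in> V" shows "gdist V E x x = 0"
proof -
  have "walk V E [x]" using assms by (auto simp: walk_def)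
  from gdist_le[OF this] have "gdist V E x x \<le> 0" by (simp add: zero_enat_def)
  then show ?thesis by simp
qed

lemma gdist_zero:
  assumes "gdist V E x w = 0" shows "w = x"
proof -
  from assms have "gdist V E x w = enat 0" by (simp add: zero_enat_def)
  from gdist_attained[OF this] obtain xs where
    "walk V E xs" "hd xs = x" "last xs = w" "length xs = 1" by auto
  then show ?thesis by (cases xs) auto
qed

lemma walk_snoc:
  assumes "simple_graph V E" "walk V E xs" "E (last xs) w"
  shows "walk V E (xs @ [w])"
proof -
  have w: "w \<in> V" using assms(1,3) unfolding simple_graph_def by blast
  have ne: "xs \<noteq> []" using assms(2) by (auto simp: walk_def)
  show ?thesis unfolding walk_def
  proof (intro conjI allI impI)
    show "set (xs @ [w]) \<subseteq> V" using assms(2) w by (auto simp: walk_def)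
    fix i assume i: "i + 1 < length (xs @ [w])"
    show "E ((xs @ [w]) ! i) ((xs @ [w]) ! (i + 1))"
    proof (cases "i + 1 < length xs")
      case True
      then show ?thesis using assms(2) by (auto simp: walk_def nth_append)
    next
      case False
      then have "i + 1 = length xs" using i by auto
      then have "i = length xs - 1" by simp
      then show ?thesis using assms(3) ne \<open>i + 1 = length xs\<close> by (auto simp: nth_append last_conv_nth)
    qed
  qed simp
qed

lemma gdist_step:
  assumes "simple_graph V E" "E w w'"
  shows "gdist V E x w' \<le> gdist V E x w + 1"
proof (cases "gdist V E x w")
  case (enat m)
  from gdist_attained[OF this] obtain xs where
    xs: "walk V E xs" "hd xs = x" "last xs = w" "length xs = Suc m" by auto
  have "walk V E (xs @ [w'])" using walk_snoc[OF assms(1) xs(1)] xs(3) assms(2) by simp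
  from gdist_le[OF this] xs have "gdist V E x w' \<le> enat (Suc m)"
    by (cases xs) auto
  then show ?thesis using enat by (simp add: eSuc_enat[symmetric] eSuc_plus_1)
next
  case infinity
  then show ?thesis by simp
qed

lemma ivt_up:
  fixes f :: "nat \<Rightarrow> nat"
  assumes "p \<le> q" "f p \<le> i" "i \<le> f q" "\<forall>t. p \<le> t \<and> t < q \<longrightarrow> f (Suc t) \<le> Suc (f t)"
  shows "\<exists>t. p \<le> t \<and> t \<le> q \<and> f t = i"
  using assms
proof (induction q)
  case 0 then show ?case by auto
next
  case (Suc q)
  show ?case
  proof (cases "p \<le> q \<and> i \<le> f q")
    case True
    then obtain t where "p \<le> t \<and> t \<le> q \<and> f t = i" using Suc.IH Suc.prems by auto
    then show ?thesis by (intro exI[of _ t]) auto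
  next
    case False
    show ?thesis
    proof (cases "p \<le> q")
      case True
      with False have "f q < i" by auto
      moreover have "f (Suc q) \<le> Suc (f q)" using Suc.prems(4) True by auto
      ultimately have "f (Suc q) = i" using Suc.prems(3) by auto
      then show ?thesis using True by (intro exI[of _ "Suc q"]) auto
    next
      case False
      then have "p = Suc q" using Suc.prems(1) by auto
      then show ?thesis using Suc.prems by (intro exI[of _ "Suc q"]) auto
    qed
  qed
qed

lemma ivt_down:
  fixes f :: "nat \<Rightarrow> nat"
  assumes "p \<le> q" "i \<le> f p" "f q \<le> i" "\<forall>t. p \<le> t \<and> t < q \<longrightarrow> f t \<le> Suc (f (Suc t))"
  shows "\<exists>t. p \<le> t \<and> t \<le> q \<and> f t = i"
  using assms
proof (induction q)
  case 0 then show ?case by auto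
next
  case (Suc q)
  show ?case
  proof (cases "p \<le> q \<and> f q \<le> i")
    case True
    then obtain t where "p \<le> t \<and> t \<le> q \<and> f t = i" using Suc.IH Suc.prems by auto
    then show ?thesis by (intro exI[of _ t]) auto
  next
    case False
    show ?thesis
    proof (cases "p \<le> q")
      case True
      with False have "i < f q" by auto
      moreover have "f q \<le> Suc (f (Suc q))" using Suc.prems(4) True by auto
      ultimately have "f (Suc q) = i" using Suc.prems(3) by auto
      then show ?thesis using True by (intro exI[of _ "Suc q"]) auto
    next
      case False
      then have "p = Suc q" using Suc.prems(1) by auto
      then show ?thesis using Suc.prems by (intro exI[of _ "Suc q"]) auto
    qed
  qed
qed

lemma list_ivt:
  fixes d :: "'a \<Rightarrow> nat"
  assumes adj: "\<forall>t. Suc t < length xs \<longrightarrow> d (xs ! Suc t) \<le> Suc (d (xs ! t)) \<and> d (xs ! t) \<le> Suc (d (xs ! Suc t))"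
    and a: "a \<in> set xs" "d a \<le> i" and b: "b \<in> set xs" "i \<le> d b"
  shows "\<exists>c\<in>set xs. d c = i"
proof -
  obtain p where p: "p < length xs" "xs ! p = a" using a by (auto simp: in_set_conv_nth)
  obtain q where q: "q < length xs" "xs ! q = b" using b by (auto simp: in_set_conv_nth)
  let ?f = "\<lambda>t. d (xs ! t)"
  have "\<exists>t. t < length xs \<and> ?f t = i"
  proof (cases "p \<le> q")
    case True
    have "\<exists>t. p \<le> t \<and> t \<le> q \<and> ?f t = i"
      by (rule ivt_up) (use True p q a b adj in auto)
    then obtain t where "t \<le> q" "?f t = i" by blast
    then show ?thesis using q by (intro exI[of _ t]) auto
  next
    case False
    have "\<exists>t. q \<le> t \<and> t \<le> p \<and> ?f t = i"
      by (rule ivt_down) (use False p q a b adj in auto)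
    then obtain t where "t \<le> p" "?f t = i" by blast
    then show ?thesis using p by (intro exI[of _ t]) auto
  qed
  then show ?thesis by auto
qed

definition cyc :: "('a \<Rightarrow> 'a \<Rightarrow> bool) \<Rightarrow> 'a list \<Rightarrow> bool" where
  "cyc E cs \<longleftrightarrow> (\<forall>i < length cs. E (cs ! i) (cs ! ((i + 1) mod length cs)))"

lemma is_cycle_cyc: "is_cycle V E cs \<longleftrightarrow> length cs \<ge> 3 \<and> distinct cs \<and> set cs \<subseteq> V \<and> cyc E cs"
  unfolding is_cycle_def cyc_def by auto

lemma cyc_rotate:
  assumes "cyc E cs" shows "cyc E (rotate m cs)"
  unfolding cyc_def
proof (intro allI impI)
  fix i assume i: "i < length (rotate m cs)"
  let ?L = "length cs"
  have L: "length (rotate m cs) = ?L" by simp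
  have pos: "0 < ?L" using i by (cases cs) auto
  have 1: "rotate m cs ! i = cs ! ((m + i) mod ?L)" using i by (simp add: nth_rotate)
  have 2: "rotate m cs ! ((i + 1) mod ?L) = cs ! ((m + (i + 1) mod ?L) mod ?L)"
    using pos by (simp add: nth_rotate)
  have 3: "(m + (i + 1) mod ?L) mod ?L = ((m + i) mod ?L + 1) mod ?L"
    by (metis add.assoc mod_add_right_eq mod_add_left_eq)
  have "E (cs ! ((m + i) mod ?L)) (cs ! (((m + i) mod ?L + 1) mod ?L))"
    using assms pos unfolding cyc_def by auto
  then show "E (rotate m cs ! i) (rotate m cs ! ((i + 1) mod length (rotate m cs)))"
    using 1 2 3 L by simp
qed

lemma hamilton_set:
  assumes "simple_graph V E" "is_cycle V E cs" "length cs = card V"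
  shows "set cs = V"
proof -
  have f: "finite V" using assms(1) by (simp add: simple_graph_def)
  have "distinct cs" "set cs \<subseteq> V" using assms(2) by (auto simp: is_cycle_def)
  then have "card (set cs) = card V" using assms(3) by (simp add: distinct_card)
  then show ?thesis using \<open>set cs \<subseteq> V\<close> f by (simp add: card_subset_eq)
qed

lemma triangle:
  assumes "simple_graph V E" "is_cycle V E cs" "length cs = 3" "edge_on_cycle u v cs"
  shows "\<exists>c. c \<noteq> u \<and> c \<noteq> v \<and> E u c \<and> E v c"
proof -
  have sym: "\<And>a b. E a b \<Longrightarrow> E b a" using assms(1) by (auto simp: simple_graph_def)
  have adj: "\<And>i. i < 3 \<Longrightarrow> E (cs ! i) (cs ! ((i + 1) mod 3))" using assms(2,3) by (auto simp: is_cycle_def)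
  have dist: "distinct cs" using assms(2) by (auto simp: is_cycle_def)
  have d: "cs ! 0 \<noteq> cs ! 1" "cs ! 0 \<noteq> cs ! 2" "cs ! 1 \<noteq> cs ! 2"
    using dist assms(3) by (auto simp: nth_eq_iff_index_eq)
  have a01: "E (cs!0) (cs!1)" and a12: "E (cs!1) (cs!2)" and a20: "E (cs!2) (cs!0)"
    using adj[of 0] adj[of 1] adj[of 2] by (simp_all add: numeral_2_eq_2)
  obtain i where i: "i < 3" "{cs ! i, cs ! ((i + 1) mod 3)} = {u, v}"
    using assms(3,4) by (auto simp: edge_on_cycle_def)
  have "i = 0 \<or> i = 1 \<or> i = 2" using i(1) by auto
  then show ?thesis
  proof (elim disjE)
    assume "i = 0"
    then have "{cs!0, cs!1} = {u,v}" using i by simp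
    then show ?thesis using d a01 a12 a20 sym by (intro exI[of _ "cs!2"]) (auto simp: doubleton_eq_iff)
  next
    assume "i = 1"
    then have "{cs!1, cs!2} = {u,v}" using i by (simp add: numeral_2_eq_2)
    then show ?thesis using d a01 a12 a20 sym by (intro exI[of _ "cs!0"]) (auto simp: doubleton_eq_iff)
  next
    assume "i = 2"
    then have "{cs!2, cs!0} = {u,v}" using i by simp
    then show ?thesis using d a01 a12 a20 sym by (intro exI[of _ "cs!1"]) (auto simp: doubleton_eq_iff)
  qed
qed


lemma walk_take:
  assumes "walk V E xs" "0 < k" "k \<le> length xs"
  shows "walk V E (take k xs)"
  using assms unfolding walk_def by (auto dest: in_set_takeD)

lemma take2_set:
  assumes "2 \<le> length xs" shows "set (take 2 xs) = {xs ! 0, xs ! 1}"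
proof -
  obtain a ys where xs: "xs = a # ys" using assms by (cases xs) auto
  obtain b zs where ys: "ys = b # zs" using assms xs by (cases ys) auto
  show ?thesis unfolding xs ys by (simp add: numeral_2_eq_2)
qed

lemma arith5:
  fixes s :: "nat \<Rightarrow> nat"
  assumes e2: "2 \<le> e" and s0: "1 \<le> s 0" and s1: "3 \<le> s 1"
    and mid: "\<forall>i. 0 < i \<and> i < e \<longrightarrow> 2 \<le> s i"
    and no22: "\<forall>i. 0 < i \<and> Suc i < e \<longrightarrow> \<not> (s i = 2 \<and> s (Suc i) = 2)"
    and last2: "s (e - 1) = 2 \<longrightarrow> 2 \<le> s e" and se: "1 \<le> s e"
  shows "5 * e \<le> 2 * (\<Sum>i<Suc e. s i)"
proof -
  have inv: "1 \<le> j \<longrightarrow> j < e \<longrightarrow> 5 * j + 2 \<le> 2 * (\<Sum>i<Suc j. s i) \<and>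
      (3 \<le> s j \<longrightarrow> 5 * j + 3 \<le> 2 * (\<Sum>i<Suc j. s i))" for j
  proof (induction j)
    case 0 then show ?case by simp
  next
    case (Suc j)
    show ?case
    proof (intro impI)
      assume j1: "1 \<le> Suc j" and je: "Suc j < e"
      show "5 * Suc j + 2 \<le> 2 * (\<Sum>i<Suc (Suc j). s i) \<and>
          (3 \<le> s (Suc j) \<longrightarrow> 5 * Suc j + 3 \<le> 2 * (\<Sum>i<Suc (Suc j). s i))"
      proof (cases "j = 0")
        case True
        then show ?thesis using s0 s1 by simp
      next
        case False
        then have IH: "5 * j + 2 \<le> 2 * (\<Sum>i<Suc j. s i) \<and>
            (3 \<le> s j \<longrightarrow> 5 * j + 3 \<le> 2 * (\<Sum>i<Suc j. s i))" using Suc.IH je by auto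
        have sj: "2 \<le> s (Suc j)" using mid je by auto
        show ?thesis
        proof (cases "3 \<le> s (Suc j)")
          case True
          then show ?thesis using IH by simp
        next
          case False
          then have "s (Suc j) = 2" using sj by simp
          then have "s j \<noteq> 2" using no22 False \<open>j \<noteq> 0\<close> je by auto
          moreover have "2 \<le> s j" using mid \<open>j \<noteq> 0\<close> je by auto
          ultimately have "3 \<le> s j" by simp
          then show ?thesis using IH \<open>s (Suc j) = 2\<close> by simp
        qed
      qed
    qed
  qed
  define j where "j = e - 1"
  have ej: "e = Suc j" using e2 unfolding j_def by simp
  have I: "5 * j + 2 \<le> 2 * (\<Sum>i<Suc j. s i) \<and>
      (3 \<le> s j \<longrightarrow> 5 * j + 3 \<le> 2 * (\<Sum>i<Suc j. s i))" using inv[of j] e2 ej by simp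
  have "2 \<le> s j" using mid e2 ej by simp
  show ?thesis
  proof (cases "s j = 2")
    case True
    then have "2 \<le> s e" using last2 unfolding j_def by simp
    then show ?thesis using I ej by simp
  next
    case False
    then have "3 \<le> s j" using \<open>2 \<le> s j\<close> by simp
    then show ?thesis using I ej se by simp
  qed
qed

locale epg =
  fixes V :: "'a set" and E :: "'a \<Rightarrow> 'a \<Rightarrow> bool" and n :: nat and u0 v0 :: 'a
  assumes sg: "simple_graph V E" and cardV: "card V = n" and n3: "3 \<le> n"
    and ep: "edge_pancyclic V E" and e0: "E u0 v0"
begin

lemma finV: "finite V" using sg by (simp add: simple_graph_def)
lemma symE: "E a b \<Longrightarrow> E b a" using sg by (auto simp: simple_graph_def)
lemma inV: "E a b \<Longrightarrow> a \<in> V \<and> b \<in> V" using sg by (auto simp: simple_graph_def)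
lemma irr: "E a b \<Longrightarrow> a \<noteq> b" using sg by (auto simp: simple_graph_def)

lemma ham: "E a b \<Longrightarrow> \<exists>cs. is_cycle V E cs \<and> length cs = n \<and> set cs = V \<and> edge_on_cycle a b cs"
proof -
  assume ab: "E a b"
  obtain cs where cs: "is_cycle V E cs" "length cs = n" "edge_on_cycle a b cs"
    using ep n3 cardV ab unfolding edge_pancyclic_def by blast
  moreover have "set cs = V" using hamilton_set[OF sg cs(1)] cs(2) cardV by simp
  ultimately show ?thesis by blast
qed

lemma tri: "E a b \<Longrightarrow> \<exists>c. c \<noteq> a \<and> c \<noteq> b \<and> E a c \<and> E b c"
proof -
  assume ab: "E a b"
  obtain cs where cs: "is_cycle V E cs" "length cs = 3" "edge_on_cycle a b cs"
    using ep n3 cardV ab unfolding edge_pancyclic_def by blast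
  then show ?thesis using triangle[OF sg] by blast
qed

end

locale epx = epg +
  fixes x assumes xV: "x \<in> V"
begin

definition d :: "'a \<Rightarrow> nat" where "d w = the_enat (gdist V E x w)"

lemma gd_fin: assumes "w \<in> V" shows "gdist V E x w = enat (d w)"
proof -
  obtain H where H: "is_cycle V E H" "length H = n" "set H = V" using ham[OF e0] by blast
  obtain p where p: "p < n" "H ! p = x" using xV H by (metis in_set_conv_nth)
  define R where "R = rotate p H"
  have R0: "R ! 0 = x" using p H(2) unfolding R_def by (simp add: nth_rotate)
  have cR: "cyc E R" using H(1) unfolding R_def is_cycle_cyc by (simp add: cyc_rotate)
  have lR: "length R = n" using H unfolding R_def by simp
  have sR: "set R = V" using H unfolding R_def by simp
  have bound: "t < n \<longrightarrow> gdist V E x (R ! t) \<le> enat t" for t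
  proof (induction t)
    case 0 then show ?case using R0 gdist_self[OF xV, of E] by (simp add: zero_enat_def)
  next
    case (Suc t)
    show ?case
    proof
      assume t: "Suc t < n"
      have all: "\<forall>i<length R. E (R ! i) (R ! ((i + 1) mod length R))" using cR cyc_def by blast
      have "E (R ! t) (R ! ((t + 1) mod length R))" using all t lR by (metis Suc_lessD)
      moreover have "(t + 1) mod length R = Suc t" using t lR by simp
      ultimately have "E (R ! t) (R ! Suc t)" by simp
      then have "gdist V E x (R ! Suc t) \<le> gdist V E x (R ! t) + 1" by (rule gdist_step[OF sg])
      also have "\<dots> \<le> enat t + 1" using Suc.IH t by (simp add: add_right_mono)
      finally show "gdist V E x (R ! Suc t) \<le> enat (Suc t)" by (simp add: one_enat_def)
    qed
  qed
  obtain t where t: "t < n" "R ! t = w" using assms sR lR by (metis in_set_conv_nth)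
  have "gdist V E x w \<le> enat t" using bound t by auto
  then have "gdist V E x w \<noteq> \<infinity>" by (cases "gdist V E x w") auto
  then show ?thesis unfolding d_def by auto
qed

lemma d_adj: assumes "E a b" shows "d b \<le> Suc (d a)"
proof -
  have "gdist V E x b \<le> gdist V E x a + 1" by (rule gdist_step[OF sg assms])
  then show ?thesis using gd_fin inV[OF assms] by (simp add: one_enat_def)
qed

lemma d_x: "d x = 0"
  using gdist_self[OF xV, of E] unfolding d_def by (simp add: zero_enat_def)

lemma d_zero: assumes "w \<in> V" "d w = 0" shows "w = x"
proof -
  have "gdist V E x w = 0" using gd_fin[OF assms(1)] assms(2) by (simp add: zero_enat_def)
  then show ?thesis by (rule gdist_zero)
qed

lemma d_pred: assumes "w \<in> V" "d w = Suc m" shows "\<exists>w'. E w' w \<and> d w' = m"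
proof -
  have "gdist V E x w = enat (Suc m)" using gd_fin[OF assms(1)] assms(2) by simp
  from gdist_attained[OF this] obtain xs where
    xs: "walk V E xs" "hd xs = x" "last xs = w" "length xs = Suc (Suc m)" by auto
  have E1: "E (xs ! m) (xs ! Suc m)" using xs(1,4) unfolding walk_def by auto
  have "xs ! Suc m = w" using xs(3,4) by (metis diff_Suc_1 last_conv_nth list.size(3) nat.simps(3))
  with E1 have Ew: "E (xs ! m) w" by simp
  have wt: "walk V E (take (Suc m) xs)" using walk_take[OF xs(1)] xs(4) by simp
  have "hd (take (Suc m) xs) = x" using xs(2,4) by (cases xs) auto
  moreover have "last (take (Suc m) xs) = xs ! m"
  proof -
    have "take (Suc m) xs \<noteq> []" using xs(4) by (cases xs) auto
    then show ?thesis using xs(4) by (simp add: last_conv_nth)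
  qed
  ultimately have "gdist V E x (xs ! m) \<le> enat (length (take (Suc m) xs) - 1)"
    using gdist_le[OF wt] by blast
  then have "gdist V E x (xs ! m) \<le> enat m" using xs(4) by simp
  then have le: "d (xs ! m) \<le> m" using gd_fin inV[OF Ew] by simp
  have "d w \<le> Suc (d (xs ! m))" by (rule d_adj[OF Ew])
  then have "m \<le> d (xs ! m)" using assms(2) by simp
  with le Ew show ?thesis by (intro exI[of _ "xs ! m"]) auto
qed

definition e :: nat where "e = Max (d ` V)"
definition L :: "nat \<Rightarrow> 'a set" where "L i = {w \<in> V. d w = i}"

lemma d_le_e: "w \<in> V \<Longrightarrow> d w \<le> e"
  unfolding e_def using finV by auto

lemma e_att: "\<exists>z\<in>V. d z = e"
proof -
  have "V \<noteq> {}" using xV by auto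
  then have "e \<in> d ` V" unfolding e_def using finV by (intro Max_in) auto
  then show ?thesis by auto
qed

lemma layer_below: "w \<in> V \<Longrightarrow> i \<le> d w \<Longrightarrow> \<exists>w'\<in>V. d w' = i"
proof (induction "d w" arbitrary: w)
  case 0 then show ?case by auto
next
  case (Suc k)
  show ?case
  proof (cases "i = Suc k")
    case True then show ?thesis using Suc.prems Suc.hyps by metis
  next
    case False
    obtain w' where w': "E w' w" "d w' = k" using d_pred Suc.prems Suc.hyps by metis
    have "w' \<in> V" using inV[OF w'(1)] by simp
    then show ?thesis using Suc.hyps(1)[of w'] w' False Suc.prems Suc.hyps(2) by auto
  qed
qed

lemma L_ne: "i \<le> e \<Longrightarrow> L i \<noteq> {}"
  using e_att layer_below unfolding L_def by fastforce

lemma L_fin: "finite (L i)" unfolding L_def using finV by auto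

lemma sep:
  assumes i: "0 < i" "i < e" and cs: "is_cycle V E cs" "length cs = n" and r: "r \<le> n"
    and S: "set (take r (rotate p cs)) = L i"
  shows False
proof -
  define R where "R = rotate p cs"
  have sR: "set R = V" using hamilton_set[OF sg cs(1)] cs(2) cardV unfolding R_def by simp
  have dR: "distinct R" using cs(1) unfolding R_def is_cycle_def by simp
  have lR: "length R = n" using cs(2) unfolding R_def by simp
  have cR: "cyc E R" using cs(1) unfolding R_def is_cycle_cyc by (simp add: cyc_rotate)
  define P where "P = drop r R"
  have disj: "set (take r R) \<inter> set P = {}" unfolding P_def using dR
    by (simp add: set_take_disj_set_drop_if_distinct)
  have un: "set (take r R) \<union> set P = V" unfolding P_def using sR
    by (metis append_take_drop_id set_append)
  have "x \<notin> set (take r R)" using S d_x i unfolding R_def L_def by auto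
  then have xP: "x \<in> set P" using un xV by auto
  obtain z where z: "z \<in> V" "d z = e" using e_att by auto
  have "z \<notin> set (take r R)" using S z i unfolding R_def L_def by auto
  then have zP: "z \<in> set P" using un z by auto
  have adj: "\<forall>t. Suc t < length P \<longrightarrow> d (P ! Suc t) \<le> Suc (d (P ! t)) \<and> d (P ! t) \<le> Suc (d (P ! Suc t))"
  proof (intro allI impI)
    fix t assume t: "Suc t < length P"
    then have t2: "r + Suc t < n" unfolding P_def using lR by simp
    have all: "\<forall>i<length R. E (R ! i) (R ! ((i + 1) mod length R))" using cR cyc_def by blast
    have "E (R ! (r + t)) (R ! ((r + t + 1) mod length R))" using all t2 lR by (metis Suc_lessD add_Suc_right)
    moreover have "(r + t + 1) mod length R = r + Suc t" using t2 lR by simp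
    ultimately have Ert: "E (R ! (r + t)) (R ! (r + Suc t))" by simp
    have "P ! t = R ! (r + t)" "P ! Suc t = R ! (r + Suc t)" unfolding P_def using t2 lR by auto
    then show "d (P ! Suc t) \<le> Suc (d (P ! t)) \<and> d (P ! t) \<le> Suc (d (P ! Suc t))"
      using d_adj[OF Ert] d_adj[OF symE[OF Ert]] by simp
  qed
  obtain c where c: "c \<in> set P" "d c = i"
    using list_ivt[OF adj xP _ zP, of i] d_x z i by auto
  have "c \<in> V" using c(1) un by auto
  then have "c \<in> L i" using c unfolding L_def by auto
  then show False using disj c S unfolding R_def by auto
qed

lemma F1: assumes "0 < i" "i < e" shows "2 \<le> card (L i)"
proof (rule ccontr)
  assume "\<not> 2 \<le> card (L i)"
  moreover have "card (L i) \<noteq> 0" using L_ne[of i] assms L_fin by auto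
  ultimately have "card (L i) = 1" by simp
  then obtain a where a: "L i = {a}" by (rule card_1_singletonE)
  obtain H where H: "is_cycle V E H" "length H = n" "set H = V" using ham[OF e0] by blast
  have "a \<in> V" using a unfolding L_def by auto
  then obtain p where p: "p < n" "H ! p = a" using H by (metis in_set_conv_nth)
  have r0: "rotate p H ! 0 = a" using p H(2) n3 by (simp add: nth_rotate)
  have "take 1 (rotate p H) = [a]" using r0 H(2) n3 by (cases "rotate p H") auto
  then have "set (take 1 (rotate p H)) = L i" using a by simp
  then show False using sep[OF assms H(1,2), of 1 p] n3 by simp
qed

lemma F2: assumes "0 < i" "i < e" "card (L i) = 2" "a \<in> L i" "b \<in> L i" shows "\<not> E a b"
proof
  assume ab: "E a b"
  have "a \<noteq> b" using irr[OF ab] .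
  then have "card {a, b} = 2" by simp
  moreover have "{a, b} \<subseteq> L i" using assms by auto
  ultimately have Lab: "L i = {a, b}" using assms(3) L_fin by (metis card_subset_eq)
  obtain cs where cs: "is_cycle V E cs" "length cs = n" "set cs = V" "edge_on_cycle a b cs"
    using ham[OF ab] by blast
  obtain p where p: "p < n" "{cs ! p, cs ! ((p + 1) mod n)} = {a, b}"
    using cs(2,4) unfolding edge_on_cycle_def by auto
  have l2: "2 \<le> length (rotate p cs)" using cs(2) n3 by simp
  have "rotate p cs ! 0 = cs ! p" using p cs(2) by (simp add: nth_rotate)
  moreover have "rotate p cs ! 1 = cs ! ((p + 1) mod n)" using cs(2) n3 by (simp add: nth_rotate)
  ultimately have "set (take 2 (rotate p cs)) = L i" using take2_set[OF l2] p Lab by simp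
  then show False using sep[OF assms(1,2) cs(1,2), of 2 p] n3 by simp
qed

lemma F3: assumes "2 \<le> e" shows "3 \<le> card (L 1)"
proof (rule ccontr)
  assume "\<not> 3 \<le> card (L 1)"
  moreover have "2 \<le> card (L 1)" using F1[of 1] assms by simp
  ultimately have c2: "card (L 1) = 2" by simp
  obtain a where a: "a \<in> L 1" using L_ne[of 1] assms by auto
  then have aV: "a \<in> V" "d a = Suc 0" unfolding L_def by auto
  obtain w where w: "E w a" "d w = 0" using d_pred[OF aV] by auto
  have "w = x" using d_zero[OF _ w(2)] inV[OF w(1)] by simp
  with w have xa: "E x a" by simp
  obtain c where c: "c \<noteq> x" "c \<noteq> a" "E x c" "E a c" using tri[OF xa] by auto
  have cV: "c \<in> V" using inV[OF c(3)] by simp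
  have "d c \<le> 1" using d_adj[OF c(3)] d_x by simp
  moreover have "d c \<noteq> 0" using d_zero[OF cV] c(1) by auto
  ultimately have "c \<in> L 1" using cV unfolding L_def by auto
  then show False using F2[of 1 a c] assms c2 a c(4) by simp
qed

lemma F4: assumes "0 < i" "Suc i < e" "card (L i) = 2" "card (L (Suc i)) = 2" shows False
proof -
  obtain c where c: "c \<in> L (Suc i)" using L_ne[of "Suc i"] assms by auto
  then have cV: "c \<in> V" "d c = Suc i" unfolding L_def by auto
  obtain a where a: "E a c" "d a = i" using d_pred[OF cV] by auto
  have aL: "a \<in> L i" using a inV[OF a(1)] unfolding L_def by auto
  obtain w where w: "w \<noteq> a" "w \<noteq> c" "E a w" "E c w" using tri[OF a(1)] by auto
  have wV: "w \<in> V" using inV[OF w(3)] by simp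
  have "d w \<le> Suc i" using d_adj[OF w(3)] a by simp
  moreover have "Suc i \<le> Suc (d w)" using d_adj[OF symE[OF w(4)]] cV by simp
  ultimately have "d w = i \<or> d w = Suc i" by auto
  then show False
  proof
    assume "d w = i"
    then have "w \<in> L i" using wV unfolding L_def by auto
    then show False using F2[of i a w] assms aL w(3) by simp
  next
    assume "d w = Suc i"
    then have "w \<in> L (Suc i)" using wV unfolding L_def by auto
    then show False using F2[of "Suc i" c w] assms c w(4) by simp
  qed
qed

lemma F5: assumes "2 \<le> e" "card (L (e - 1)) = 2" shows "2 \<le> card (L e)"
proof (rule ccontr)
  assume "\<not> 2 \<le> card (L e)"
  moreover have "card (L e) \<noteq> 0" using L_ne[of e] L_fin by auto
  ultimately have "card (L e) = 1" by simp
  then obtain z where z: "L e = {z}" by (rule card_1_singletonE)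
  then have zV: "z \<in> V" "d z = Suc (e - 1)" using assms unfolding L_def by auto
  obtain a where a: "E a z" "d a = e - 1" using d_pred[OF zV] by auto
  have aL: "a \<in> L (e - 1)" using a inV[OF a(1)] unfolding L_def by auto
  obtain w where w: "w \<noteq> a" "w \<noteq> z" "E a w" "E z w" using tri[OF a(1)] by auto
  have wV: "w \<in> V" using inV[OF w(3)] by simp
  have "d w \<le> e" using d_le_e[OF wV] .
  moreover have "Suc (e - 1) \<le> Suc (d w)" using d_adj[OF symE[OF w(4)]] zV by simp
  ultimately have "d w = e - 1 \<or> d w = e" by auto
  then show False
  proof
    assume "d w = e - 1"
    then have "w \<in> L (e - 1)" using wV unfolding L_def by auto
    then show False using F2[of "e - 1" a w] assms aL w(3) by simp
  next
    assume "d w = e"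
    then have "w \<in> L e" using wV unfolding L_def by auto
    then show False using z w(2) by auto
  qed
qed

lemma sumL: "(\<Sum>i<Suc e. card (L i)) \<le> n"
proof -
  have "(\<Sum>i<Suc e. card (L i)) = card (\<Union>i<Suc e. L i)"
    by (rule card_UN_disjoint[symmetric]) (auto simp: L_def finV)
  also have "\<dots> \<le> card V" by (rule card_mono[OF finV]) (auto simp: L_def)
  finally show ?thesis using cardV by simp
qed

lemma five_e: assumes "2 \<le> e" shows "5 * e \<le> 2 * n"
proof -
  have "5 * e \<le> 2 * (\<Sum>i<Suc e. card (L i))"
  proof (rule arith5[OF assms])
    show "1 \<le> card (L 0)" using L_ne[of 0] L_fin by (simp add: Suc_le_eq card_gt_0_iff)
    show "3 \<le> card (L 1)" using F3[OF assms] .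
    show "\<forall>i. 0 < i \<and> i < e \<longrightarrow> 2 \<le> card (L i)" using F1 by auto
    show "\<forall>i. 0 < i \<and> Suc i < e \<longrightarrow> \<not> (card (L i) = 2 \<and> card (L (Suc i)) = 2)" using F4 by auto
    show "card (L (e - 1)) = 2 \<longrightarrow> 2 \<le> card (L e)" using F5[OF assms] by auto
    show "1 \<le> card (L e)" using L_ne[of e] L_fin by (simp add: Suc_le_eq card_gt_0_iff)
  qed
  then show ?thesis using sumL by simp
qed

end

lemma part1:
  assumes sg: "simple_graph V E" and cV: "card V = n" and n3: "3 \<le> n"
    and ep: "edge_pancyclic V E" and e0: "E u0 v0"
  shows "diameter V E \<le> enat (2 * n div 5)"
  unfolding diameter_def
proof (intro SUP_least)
  fix x y assume xV: "x \<in> V" and yV: "y \<in> V"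
  interpret epx V E n u0 v0 x using assms xV by unfold_locales auto
  show "gdist V E x y \<le> enat (2 * n div 5)"
  proof (rule ccontr)
    assume "\<not> gdist V E x y \<le> enat (2 * n div 5)"
    then have dy: "2 * n div 5 < d y" using gd_fin[OF yV] by simp
    have "d y \<le> e" using d_le_e[OF yV] .
    moreover have "1 \<le> 2 * n div 5" using n3 by simp
    ultimately have "2 \<le> e" using dy by simp
    then have "5 * e \<le> 2 * n" by (rule five_e)
    moreover have "2 * n < 5 * (2 * n div 5 + 1)" by simp
    ultimately show False using dy \<open>d y \<le> e\<close> by simp
  qed
qed

lemma succ_upt: "(\<And>t. m \<le> t \<Longrightarrow> Suc t < k \<Longrightarrow> P t (Suc t)) \<Longrightarrow> successively P [m..<k]"
proof (induction k)
  case 0 then show ?case by simp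
next
  case (Suc k)
  show ?case
  proof (cases "m \<le> k")
    case False then show ?thesis by simp
  next
    case True
    have e: "[m..<Suc k] = [m..<k] @ [k]" using True by simp
    have s: "successively P [m..<k]" using Suc by auto
    have "[m..<k] = [] \<or> P (last [m..<k]) k"
    proof (cases "m < k")
      case True
      then have "last [m..<k] = k - 1" by simp
      moreover have "P (k - 1) (Suc (k - 1))" using Suc.prems[of "k - 1"] True by simp
      ultimately show ?thesis using True by simp
    qed simp
    then show ?thesis unfolding e using s by (auto simp: successively_append_iff)
  qed
qed

lemma succ_nth: "successively P xs \<Longrightarrow> Suc i < length xs \<Longrightarrow> P (xs ! i) (xs ! Suc i)"
proof (induction xs arbitrary: i)
  case Nil then show ?case by simp
next
  case (Cons x xs)
  show ?case
  proof (cases i)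
    case 0
    then show ?thesis using Cons.prems by (cases xs) (auto simp: successively_Cons)
  next
    case (Suc j)
    then show ?thesis using Cons.prems Cons.IH[of j] by (cases xs) (auto simp: successively_Cons)
  qed
qed

lemma cyc_of_succ:
  assumes "xs \<noteq> []" "successively P xs" "P (last xs) (hd xs)"
  shows "cyc P xs"
  unfolding cyc_def
proof (intro allI impI)
  fix i assume i: "i < length xs"
  show "P (xs ! i) (xs ! ((i + 1) mod length xs))"
  proof (cases "Suc i < length xs")
    case True
    then show ?thesis using succ_nth[OF assms(2) True] by simp
  next
    case False
    then have "i = length xs - 1" using i by simp
    then show ?thesis using assms(1,3) by (simp add: last_conv_nth hd_conv_nth)
  qed
qed

lemma hd_concat_map: "(\<forall>j\<in>set js. f j \<noteq> []) \<Longrightarrow> js \<noteq> [] \<Longrightarrow> hd (concat (map f js)) = hd (f (hd js))"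
  by (cases js) auto

lemma last_concat_map: "(\<forall>j\<in>set js. f j \<noteq> []) \<Longrightarrow> js \<noteq> [] \<Longrightarrow> last (concat (map f js)) = last (f (last js))"
proof (induction js)
  case Nil then show ?case by simp
next
  case (Cons j js)
  then show ?case by (cases js) auto
qed

lemma succ_concat:
  assumes "\<forall>j\<in>set js. f j \<noteq> [] \<and> successively P (f j)"
    and "successively (\<lambda>i j. P (last (f i)) (hd (f j))) js"
  shows "successively P (concat (map f js))"
  using assms
proof (induction js)
  case Nil then show ?case by simp
next
  case (Cons j js)
  have IH: "successively P (concat (map f js))" using Cons by (auto simp: successively_Cons)
  show ?case
  proof (cases js)
    case Nil then show ?thesis using Cons.prems by simp
  next
    case (Cons j' js')
    have "P (last (f j)) (hd (concat (map f js)))"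
      using Cons.prems hd_concat_map[of js f] \<open>js = j' # js'\<close> by (auto simp: successively_Cons)
    then show ?thesis using IH Cons.prems by (auto simp: successively_append_iff)
  qed
qed

lemma edge_on_split: "edge_on_cycle p q (xs @ p # q # ys)"
  unfolding edge_on_cycle_def
  by (rule exI[of _ "length xs"]) (auto simp: nth_append)

lemma crossing:
  fixes f :: "nat \<Rightarrow> nat"
  assumes "p \<le> q" "f p \<le> i" "i < f q"
  shows "\<exists>t. p \<le> t \<and> t < q \<and> f t \<le> i \<and> i < f (Suc t)"
  using assms
proof (induction q)
  case 0 then show ?case by simp
next
  case (Suc q)
  show ?case
  proof (cases "p \<le> q \<and> i < f q")
    case True
    then obtain t where "p \<le> t \<and> t < q \<and> f t \<le> i \<and> i < f (Suc t)" using Suc by auto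
    then show ?thesis by (intro exI[of _ t]) auto
  next
    case False
    have "p \<noteq> Suc q" using Suc.prems by auto
    then have "p \<le> q" using Suc.prems by simp
    then show ?thesis using False Suc.prems by (intro exI[of _ q]) auto
  qed
qed

lemma fill:
  fixes lo hi :: "nat \<Rightarrow> nat"
  assumes "finite S" "\<forall>j\<in>S. lo j \<le> hi j" "sum lo S \<le> k" "k \<le> sum hi S"
  shows "\<exists>c. (\<forall>j\<in>S. lo j \<le> c j \<and> c j \<le> hi j) \<and> sum c S = k"
  using assms
proof (induction S arbitrary: k rule: finite_induct)
  case empty then show ?case by auto
next
  case (insert x S)
  define cx where "cx = (if k - lo x \<le> sum hi S then lo x else k - sum hi S)"
  have lx: "lo x \<le> hi x" using insert.prems by auto
  have sk: "lo x + sum lo S \<le> k" "k \<le> hi x + sum hi S" using insert by auto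
  have slh: "sum lo S \<le> sum hi S" using insert.prems by (intro sum_mono) auto
  have cx: "lo x \<le> cx" "cx \<le> hi x" "cx \<le> k" "sum lo S \<le> k - cx" "k - cx \<le> sum hi S"
    using sk lx slh unfolding cx_def by auto
  obtain c where c: "\<forall>j\<in>S. lo j \<le> c j \<and> c j \<le> hi j" "sum c S = k - cx"
    using insert.IH[of "k - cx"] insert.prems cx by auto
  define c' where "c' = c(x := cx)"
  have "sum c' S = sum c S" unfolding c'_def using insert.hyps by (intro sum.cong) auto
  then have "sum c' (insert x S) = k" using insert.hyps c cx unfolding c'_def by simp
  moreover have "\<forall>j\<in>insert x S. lo j \<le> c' j \<and> c' j \<le> hi j" using c cx unfolding c'_def by auto
  ultimately show ?case by blast
qed

lemma chain_cover:
  fixes mm MM :: "nat \<Rightarrow> nat"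
  assumes "mm 0 \<le> 3" "\<forall>t<T. mm (Suc t) \<le> MM t + 1"
  shows "3 \<le> k \<Longrightarrow> k \<le> MM T \<Longrightarrow> \<exists>t\<le>T. mm t \<le> k \<and> k \<le> MM t"
  using assms(2)
proof (induction T)
  case 0 then show ?case using assms(1) by auto
next
  case (Suc T)
  show ?case
  proof (cases "k \<le> MM T")
    case True
    then obtain t where "t \<le> T" "mm t \<le> k \<and> k \<le> MM t" using Suc by auto
    then show ?thesis by (intro exI[of _ t]) auto
  next
    case False
    then have "mm (Suc T) \<le> k" using Suc.prems(3) by force
    then show ?thesis using Suc.prems(2) by (intro exI[of _ "Suc T"]) auto
  qed
qed

lemma distinct_concat_layers:
  assumes "distinct js" "\<forall>j\<in>set js. distinct (f j) \<and> (\<forall>p\<in>set (f j). fst p = j)"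
  shows "distinct (concat (map f js))"
  using assms
proof (induction js)
  case Nil then show ?case by simp
next
  case (Cons j js)
  have "set (f j) \<inter> set (concat (map f js)) = {}"
    using Cons.prems by fastforce
  then show ?case using Cons by auto
qed

definition good :: "nat \<Rightarrow> (nat \<Rightarrow> nat) \<Rightarrow> (nat \<Rightarrow> bool) \<Rightarrow> nat \<Rightarrow> bool" where
  "good D sz big j \<longleftrightarrow> big j \<and> (if j = 0 \<or> j = D then 2 \<le> sz j else 3 \<le> sz j)"

locale blowup =
  fixes D :: nat and sz :: "nat \<Rightarrow> nat" and big :: "nat \<Rightarrow> bool"
  assumes D1: "1 \<le> D"
    and sz_pos: "\<And>j. j \<le> D \<Longrightarrow> 1 \<le> sz j"
    and sz0: "sz 0 = 1"
    and mid2: "\<And>j. 0 < j \<Longrightarrow> j < D \<Longrightarrow> 2 \<le> sz j"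
    and nonbig: "\<And>j. j \<le> D \<Longrightarrow> \<not> big j \<Longrightarrow> sz j \<le> 2"
    and big0: "big 0" and bigD: "big D"
    and bigmid: "\<And>j. 0 < j \<Longrightarrow> j < D \<Longrightarrow> big j \<Longrightarrow> 3 \<le> sz j"
    and szD: "2 \<le> D \<Longrightarrow> sz D = 1"
    and pair_good: "\<And>i. i < D \<Longrightarrow> good D sz big i \<or> good D sz big (Suc i)"
begin

definition Vp :: "(nat \<times> nat) set" where "Vp = {p. fst p \<le> D \<and> snd p < sz (fst p)}"
definition Ep :: "nat \<times> nat \<Rightarrow> nat \<times> nat \<Rightarrow> bool" where
  "Ep p q \<longleftrightarrow> p \<in> Vp \<and> q \<in> Vp \<and> p \<noteq> q \<and>
     (Suc (fst p) = fst q \<or> Suc (fst q) = fst p \<or> (fst p = fst q \<and> big (fst p)))"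

definition endb :: "(nat \<Rightarrow> nat) \<Rightarrow> nat \<Rightarrow> (nat \<times> nat) list" where
  "endb c j = map (\<lambda>t. (j, t)) [0..<c j]"
definition mid :: "(nat \<Rightarrow> nat) \<Rightarrow> nat \<Rightarrow> (nat \<times> nat) list" where
  "mid c j = (j, 0) # map (\<lambda>t. (j, t)) [2..<c j]"
definition midc :: "(nat \<Rightarrow> nat) \<Rightarrow> nat \<Rightarrow> nat \<Rightarrow> (nat \<times> nat) list" where
  "midc c a b = concat (map (mid c) [Suc a..<b])"
definition dn :: "nat \<Rightarrow> nat \<Rightarrow> (nat \<times> nat) list" where
  "dn a b = map (\<lambda>j. (j, 1)) (rev [Suc a..<b])"
definition W :: "(nat \<Rightarrow> nat) \<Rightarrow> nat \<Rightarrow> nat \<Rightarrow> (nat \<times> nat) list" where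
  "W c a b = endb c a @ midc c a b @ endb c b @ dn a b"

definition valid :: "(nat \<Rightarrow> nat) \<Rightarrow> nat \<Rightarrow> nat \<Rightarrow> bool" where
  "valid c a b \<longleftrightarrow> a < b \<and> b \<le> D \<and>
     1 \<le> c a \<and> c a \<le> (if big a then sz a else 1) \<and> 1 \<le> c b \<and> c b \<le> (if big b then sz b else 1) \<and>
     (\<forall>j. a < j \<and> j < b \<longrightarrow> 2 \<le> c j \<and> c j \<le> sz j) \<and> 3 \<le> sum c {a..b}"

lemma Ep_cross: "p \<in> Vp \<Longrightarrow> q \<in> Vp \<Longrightarrow> Suc (fst p) = fst q \<or> Suc (fst q) = fst p \<Longrightarrow> Ep p q"
  unfolding Ep_def by auto

lemma Ep_same: "p \<in> Vp \<Longrightarrow> q \<in> Vp \<Longrightarrow> fst p = fst q \<Longrightarrow> snd p \<noteq> snd q \<Longrightarrow> big (fst p) \<Longrightarrow> Ep p q"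
  unfolding Ep_def by auto

lemma Ep_sym: "Ep p q \<Longrightarrow> Ep q p"
  unfolding Ep_def by auto

lemma Ep_lay: "Ep p q \<Longrightarrow> fst q \<le> Suc (fst p) \<and> fst p \<le> Suc (fst q)"
  unfolding Ep_def by auto

lemma inVp: "(j, t) \<in> Vp \<longleftrightarrow> j \<le> D \<and> t < sz j"
  unfolding Vp_def by simp

lemma set_endb: "p \<in> set (endb c j) \<longleftrightarrow> fst p = j \<and> snd p < c j"
  unfolding endb_def by (cases p) auto

lemma set_mid: "p \<in> set (mid c j) \<Longrightarrow> fst p = j \<and> (snd p < c j \<or> snd p = 0) \<and> snd p \<noteq> 1"
  unfolding mid_def by auto

lemma set_midc: "p \<in> set (midc c a b) \<Longrightarrow> a < fst p \<and> fst p < b \<and> (snd p < c (fst p) \<or> snd p = 0) \<and> snd p \<noteq> 1"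
  unfolding midc_def using set_mid by fastforce

lemma set_dn: "p \<in> set (dn a b) \<longleftrightarrow> a < fst p \<and> fst p < b \<and> snd p = 1"
  unfolding dn_def by (cases p) auto

context
  fixes c a b assumes v: "valid c a b"
begin

lemma v_ab: "a < b" "b \<le> D" using v unfolding valid_def by auto
lemma v_ca: "1 \<le> c a" "c a \<le> sz a" "2 \<le> c a \<Longrightarrow> big a"
  using v sz_pos[of a] v_ab unfolding valid_def by (auto split: if_splits)
lemma v_cb: "1 \<le> c b" "c b \<le> sz b" "2 \<le> c b \<Longrightarrow> big b"
  using v sz_pos[of b] v_ab unfolding valid_def by (auto split: if_splits)
lemma v_cj: "a < j \<Longrightarrow> j < b \<Longrightarrow> 2 \<le> c j \<and> c j \<le> sz j \<and> (3 \<le> c j \<longrightarrow> big j)"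
  using v nonbig[of j] v_ab unfolding valid_def by force

lemma W_sub: "set (W c a b) \<subseteq> Vp"
proof
  fix p assume p: "p \<in> set (W c a b)"
  obtain j t where pe: "p = (j, t)" by (cases p)
  show "p \<in> Vp"
    using p v_ab v_ca v_cb v_cj[of j] mid2[of j] set_midc[of p c a b]
    unfolding W_def pe inVp by (auto simp: set_endb set_dn)
qed

lemma W_distinct: "distinct (W c a b)"
proof -
  have d1: "distinct (endb c a)" "distinct (endb c b)" unfolding endb_def by (auto simp: distinct_map inj_on_def)
  have d2: "distinct (dn a b)" unfolding dn_def by (auto simp: distinct_map inj_on_def)
  have d3: "distinct (midc c a b)" unfolding midc_def
    by (rule distinct_concat_layers) (auto simp: mid_def distinct_map inj_on_def)
  show ?thesis unfolding W_def using d1 d2 d3 v_ab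
    by (auto simp: set_endb set_dn dest: set_midc)
qed

lemma len_mid: "a < j \<Longrightarrow> j < b \<Longrightarrow> length (mid c j) = c j - 1"
proof -
  assume "a < j" "j < b"
  then have "2 \<le> c j" using v_cj[of j] by simp
  then show ?thesis unfolding mid_def by simp
qed

lemma W_len: "length (W c a b) = sum c {a..b}"
proof -
  have "length (midc c a b) = (\<Sum>j\<in>{Suc a..<b}. length (mid c j))"
    unfolding midc_def length_concat map_map
    by (simp add: interv_sum_list_conv_sum_set_nat comp_def)
  also have "\<dots> = (\<Sum>j\<in>{Suc a..<b}. c j - 1)" by (rule sum.cong) (auto simp: len_mid)
  finally have lm: "length (midc c a b) = (\<Sum>j\<in>{Suc a..<b}. c j - 1)" .
  have s1: "(\<Sum>j\<in>{Suc a..<b}. c j - 1) + (b - Suc a) = (\<Sum>j\<in>{Suc a..<b}. c j)"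
  proof -
    have "(\<Sum>j\<in>{Suc a..<b}. c j) = (\<Sum>j\<in>{Suc a..<b}. (c j - 1) + 1)"
    proof (rule sum.cong)
      fix x assume "x \<in> {Suc a..<b}"
      then have "2 \<le> c x" using v_cj[of x] by auto
      then show "c x = c x - 1 + 1" by simp
    qed simp
    also have "\<dots> = (\<Sum>j\<in>{Suc a..<b}. c j - 1) + (\<Sum>j\<in>{Suc a..<b}. 1)" by (rule sum.distrib)
    also have "\<dots> = (\<Sum>j\<in>{Suc a..<b}. c j - 1) + (b - Suc a)" by simp
    finally show ?thesis by simp
  qed
  have s2: "{a..b} = insert a (insert b {Suc a..<b})" using v_ab by auto
  have s3: "sum c {a..b} = c a + (c b + (\<Sum>j\<in>{Suc a..<b}. c j))"
    unfolding s2 using v_ab by simp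
  show ?thesis unfolding W_def using lm s1 s3 by (simp add: endb_def dn_def)
qed

lemma succ_endb_a: "successively Ep (endb c a)"
  unfolding endb_def successively_map
  by (rule succ_upt) (use v_ab v_ca in \<open>auto intro!: Ep_same simp: inVp\<close>)

lemma succ_endb_b: "successively Ep (endb c b)"
  unfolding endb_def successively_map
  by (rule succ_upt) (use v_ab v_cb in \<open>auto intro!: Ep_same simp: inVp\<close>)

lemma succ_mid: "a < j \<Longrightarrow> j < b \<Longrightarrow> successively Ep (mid c j)"
proof -
  assume j: "a < j" "j < b"
  have cj: "2 \<le> c j" "c j \<le> sz j" "3 \<le> c j \<longrightarrow> big j" using v_cj[OF j] by auto
  have jD: "j \<le> D" using j v_ab by simp
  have s: "successively Ep (map (\<lambda>t. (j, t)) [2..<c j])"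
    unfolding successively_map
    by (rule succ_upt) (use cj jD in \<open>auto intro!: Ep_same simp: inVp\<close>)
  show ?thesis
  proof (cases "c j = 2")
    case True then show ?thesis unfolding mid_def by simp
  next
    case False
    then have "3 \<le> c j" using cj by simp
    then have "Ep (j, 0) (j, 2)" using cj jD by (auto intro!: Ep_same simp: inVp)
    then show ?thesis unfolding mid_def using s \<open>3 \<le> c j\<close>
      by (auto simp: successively_Cons upt_conv_Cons)
  qed
qed

lemma last_endb: "1 \<le> c j \<Longrightarrow> last (endb c j) = (j, c j - 1)"
  unfolding endb_def by (simp add: last_map)

lemma hd_endb: "1 \<le> c j \<Longrightarrow> hd (endb c j) = (j, 0)"
  unfolding endb_def by (simp add: hd_map)

lemma W_hd: "hd (W c a b) = (a, 0)"
  unfolding W_def using v_ca hd_endb[of a] by (simp add: endb_def)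

lemma W_b: "(b, 0) \<in> set (W c a b)"
  unfolding W_def using v_cb by (auto simp: set_endb)

lemma W_cyc: "cyc Ep (W c a b)"
proof (cases "b = Suc a")
  case True
  have e: "W c a b = endb c a @ endb c b" unfolding W_def midc_def dn_def True by simp
  have ne: "endb c a \<noteq> []" "endb c b \<noteq> []" using v_ca v_cb unfolding endb_def by auto
  have "Ep (a, c a - 1) (b, 0)" using v_ab v_ca v_cb True by (intro Ep_cross) (auto simp: inVp)
  moreover have "last (endb c a) = (a, c a - 1)" using last_endb[OF v_ca(1)] .
  moreover have "hd (endb c b) = (b, 0)" using hd_endb[OF v_cb(1)] .
  ultimately have s: "successively Ep (W c a b)" unfolding e using succ_endb_a succ_endb_b ne
    by (auto simp: successively_append_iff)
  have "last (W c a b) = (b, c b - 1)" unfolding e using ne last_endb v_cb by simp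
  moreover have "Ep (b, c b - 1) (a, 0)" using v_ab v_ca v_cb True by (intro Ep_cross) (auto simp: inVp)
  ultimately show ?thesis using cyc_of_succ[OF _ s] W_hd e ne by simp
next
  case False
  then have ab: "Suc a < b" using v_ab by simp
  have ne_mid: "\<forall>j\<in>set [Suc a..<b]. mid c j \<noteq> []" unfolding mid_def by simp
  have midc_ne: "midc c a b \<noteq> []" unfolding midc_def using ab by (simp add: mid_def upt_conv_Cons)
  have hd_midc: "hd (midc c a b) = (Suc a, 0)"
  proof -
    have "hd (midc c a b) = hd (mid c (hd [Suc a..<b]))" unfolding midc_def
      using hd_concat_map[OF ne_mid] ab by simp
    also have "\<dots> = (Suc a, 0)" using ab by (simp add: mid_def)
    finally show ?thesis .
  qed
  have last_midc: "last (midc c a b) \<in> set (mid c (b - 1))"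
  proof -
    have "last (midc c a b) = last (mid c (last [Suc a..<b]))" unfolding midc_def
      using last_concat_map[OF ne_mid] ab by simp
    moreover have "last [Suc a..<b] = b - 1" using ab by simp
    moreover have "last (mid c (b - 1)) \<in> set (mid c (b - 1))" by (rule last_in_set) (simp add: mid_def)
    ultimately show ?thesis by simp
  qed
  then have lm: "fst (last (midc c a b)) = b - 1" "last (midc c a b) \<in> Vp"
    using set_mid[of "last (midc c a b)" c "b - 1"] W_sub midc_ne unfolding W_def by auto
  have succ_midc: "successively Ep (midc c a b)" unfolding midc_def
  proof (rule succ_concat)
    show "\<forall>j\<in>set [Suc a..<b]. mid c j \<noteq> [] \<and> successively Ep (mid c j)"
      using succ_mid by (auto simp: mid_def)
    show "successively (\<lambda>i j. Ep (last (mid c i)) (hd (mid c j))) [Suc a..<b]"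
    proof (rule succ_upt)
      fix t assume t: "Suc a \<le> t" "Suc t < b"
      have "last (mid c t) \<in> set (mid c t)" by (rule last_in_set) (simp add: mid_def)
      then have l: "fst (last (mid c t)) = t" "last (mid c t) \<in> Vp"
        using set_mid[of "last (mid c t)" c t] v_cj[of t] t v_ab
        by (auto simp: inVp mem_Collect_eq Vp_def)
      show "Ep (last (mid c t)) (hd (mid c (Suc t)))"
        using l t v_ab mid2[of "Suc t"] by (intro Ep_cross) (auto simp: mid_def inVp)
    qed
  qed
  have dn_ne: "dn a b \<noteq> []" unfolding dn_def using ab by simp
  have hd_dn: "hd (dn a b) = (b - 1, 1)" unfolding dn_def using ab by (simp add: hd_map hd_rev)
  have last_dn: "last (dn a b) = (Suc a, 1)" unfolding dn_def using ab by (simp add: last_map last_rev)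
  have succ_dn: "successively Ep (dn a b)" unfolding dn_def successively_map successively_rev
  proof (rule succ_upt)
    fix t assume t: "Suc a \<le> t" "Suc t < b"
    have "2 \<le> sz t" "2 \<le> sz (Suc t)" using mid2 t v_ab by auto
    then show "Ep (Suc t, 1) (t, 1)" using t v_ab by (intro Ep_cross) (auto simp: inVp)
  qed
  have ne: "endb c a \<noteq> []" "endb c b \<noteq> []" using v_ca v_cb unfolding endb_def by auto
  have j1: "Ep (a, c a - 1) (Suc a, 0)" using v_ab v_ca mid2[of "Suc a"] ab by (intro Ep_cross) (auto simp: inVp)
  have j2: "Ep (last (midc c a b)) (b, 0)" using lm v_ab v_cb ab by (intro Ep_cross) (auto simp: inVp)
  have "2 \<le> sz (b - 1)" using mid2[of "b - 1"] ab v_ab by simp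
  then have j3: "Ep (b, c b - 1) (b - 1, 1)" using v_ab v_cb ab by (intro Ep_cross) (auto simp: inVp)
  have la: "last (endb c a) = (a, c a - 1)" using last_endb[OF v_ca(1)] .
  have lb: "last (endb c b) = (b, c b - 1)" using last_endb[OF v_cb(1)] .
  have hb: "hd (endb c b) = (b, 0)" using hd_endb[OF v_cb(1)] .
  have s: "successively Ep (W c a b)" unfolding W_def
    using succ_endb_a succ_endb_b succ_midc succ_dn ne midc_ne dn_ne j1 j2 j3
    by (auto simp: successively_append_iff la lb hb hd_midc hd_dn)
  have "last (W c a b) = (Suc a, 1)" unfolding W_def using dn_ne last_dn by simp
  moreover have "Ep (Suc a, 1) (a, 0)" using v_ab v_ca mid2[of "Suc a"] ab by (intro Ep_cross) (auto simp: inVp)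
  moreover have "W c a b \<noteq> []" unfolding W_def using ne by simp
  ultimately show ?thesis using cyc_of_succ[OF _ s] W_hd by simp
qed

lemma W_cycle: "is_cycle Vp Ep (W c a b)"
  unfolding is_cycle_cyc using W_cyc W_distinct W_sub W_len v unfolding valid_def by auto


lemma W_cross:
  assumes "a \<le> i" "Suc i \<le> b"
  shows "\<exists>p q. fst p = i \<and> fst q = Suc i \<and> edge_on_cycle p q (W c a b)"
proof -
  let ?cs = "W c a b"
  have cy: "is_cycle Vp Ep ?cs" by (rule W_cycle)
  obtain q where q: "q < length ?cs" "?cs ! q = (b, 0)" using W_b by (metis in_set_conv_nth)
  have ne: "?cs \<noteq> []" using q by auto
  have h0: "fst (?cs ! 0) = a" using W_hd ne by (simp add: hd_conv_nth)
  let ?f = "\<lambda>t. fst (?cs ! t)"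
  obtain t where t: "t < q" "?f t \<le> i" "i < ?f (Suc t)"
    using crossing[of 0 q ?f i] h0 q assms by auto
  have all: "\<forall>j<length ?cs. Ep (?cs ! j) (?cs ! ((j + 1) mod length ?cs))"
    using cy unfolding is_cycle_def by blast
  have tl: "t < length ?cs" using t q by simp
  have "Ep (?cs ! t) (?cs ! ((t + 1) mod length ?cs))" using all tl by blast
  moreover have "(t + 1) mod length ?cs = Suc t" using t q by simp
  ultimately have E1: "Ep (?cs ! t) (?cs ! Suc t)" by simp
  then have "?f t = i" "?f (Suc t) = Suc i" using Ep_lay[OF E1] t by auto
  moreover have "edge_on_cycle (?cs ! t) (?cs ! Suc t) ?cs"
    unfolding edge_on_cycle_def using t q \<open>(t + 1) mod length ?cs = Suc t\<close>
    by (intro exI[of _ t]) auto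
  ultimately show ?thesis by blast
qed

lemma W_clique_a: "2 \<le> c a \<Longrightarrow> edge_on_cycle (a, 0) (a, 1) (W c a b)"
proof -
  assume "2 \<le> c a"
  then have "endb c a = (a, 0) # (a, 1) # map (\<lambda>t. (a, t)) [2..<c a]"
    unfolding endb_def by (simp add: upt_conv_Cons numeral_2_eq_2)
  then have "W c a b = [] @ (a, 0) # (a, 1) # (map (\<lambda>t. (a, t)) [2..<c a] @ midc c a b @ endb c b @ dn a b)"
    unfolding W_def by simp
  then show ?thesis by (metis edge_on_split)
qed

lemma W_clique_b: "2 \<le> c b \<Longrightarrow> edge_on_cycle (b, 0) (b, 1) (W c a b)"
proof -
  assume "2 \<le> c b"
  then have "endb c b = (b, 0) # (b, 1) # map (\<lambda>t. (b, t)) [2..<c b]"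
    unfolding endb_def by (simp add: upt_conv_Cons numeral_2_eq_2)
  then have "W c a b = (endb c a @ midc c a b) @ (b, 0) # (b, 1) # (map (\<lambda>t. (b, t)) [2..<c b] @ dn a b)"
    unfolding W_def by simp
  then show ?thesis by (metis edge_on_split)
qed

lemma W_clique_mid: "a < j \<Longrightarrow> j < b \<Longrightarrow> 3 \<le> c j \<Longrightarrow> edge_on_cycle (j, 0) (j, 2) (W c a b)"
proof -
  assume j: "a < j" "j < b" "3 \<le> c j"
  have "[Suc a..<b] = [Suc a..<j] @ [j..<b]" using j upt_add_eq_append[of "Suc a" j "b - j"] by simp
  also have "[j..<b] = j # [Suc j..<b]" using j by (simp add: upt_conv_Cons)
  finally have "[Suc a..<b] = [Suc a..<j] @ j # [Suc j..<b]" .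
  moreover have "mid c j = (j, 0) # (j, 2) # map (\<lambda>t. (j, t)) [3..<c j]"
    using j unfolding mid_def by (simp add: upt_conv_Cons numeral_3_eq_3 numeral_2_eq_2)
  ultimately have "midc c a b = concat (map (mid c) [Suc a..<j]) @ (j, 0) # (j, 2) #
      (map (\<lambda>t. (j, t)) [3..<c j] @ concat (map (mid c) [Suc j..<b]))"
    unfolding midc_def by simp
  then have "W c a b = (endb c a @ concat (map (mid c) [Suc a..<j])) @ (j, 0) # (j, 2) #
      ((map (\<lambda>t. (j, t)) [3..<c j] @ concat (map (mid c) [Suc j..<b])) @ endb c b @ dn a b)"
    unfolding W_def by simp
  then show ?thesis by (metis edge_on_split)
qed

end

definition lo :: "nat \<Rightarrow> nat \<Rightarrow> nat \<Rightarrow> nat \<Rightarrow> nat" where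
  "lo sp a b j = (if j = a \<or> j = b then 1 else 2) + (if j = sp then 1 else 0)"
definition hi :: "nat \<Rightarrow> nat \<Rightarrow> nat \<Rightarrow> nat" where
  "hi a b j = (if j = a \<or> j = b then (if big j then sz j else 1) else sz j)"

lemma sum_lo:
  assumes "a < b"
  shows "sum (lo sp a b) {a..b} = 2 * (b - a) + (if a \<le> sp \<and> sp \<le> b then 1 else 0)"
proof -
  let ?base = "\<lambda>j. (if j = a \<or> j = b then 1 else 2::nat)"
  have "(\<Sum>j\<in>{a..b}. ?base j + (if j = a then 1 else 0) + (if j = b then 1 else 0)) = (\<Sum>j\<in>{a..b}. 2::nat)"
    using assms by (intro sum.cong) auto
  moreover have "(\<Sum>j\<in>{a..b}. ?base j + (if j = a then 1 else 0) + (if j = b then 1 else 0))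
      = sum ?base {a..b} + 1 + 1" using assms by (simp add: sum.distrib)
  moreover have "(\<Sum>j\<in>{a..b}. 2::nat) = 2 * (Suc b - a)" by simp
  ultimately have b: "sum ?base {a..b} = 2 * (b - a)" using assms by simp
  have "sum (lo sp a b) {a..b} = sum ?base {a..b} + (\<Sum>j\<in>{a..b}. if j = sp then 1 else 0)"
    unfolding lo_def by (simp add: sum.distrib)
  also have "(\<Sum>j\<in>{a..b}. if j = sp then 1 else (0::nat)) = (if a \<le> sp \<and> sp \<le> b then 1 else 0)"
    by (simp add: sum.delta')
  finally show ?thesis using b by simp
qed

lemma window_cycle:
  assumes ab: "a < b" "b \<le> D" and lh: "\<forall>j\<in>{a..b}. lo sp a b j \<le> hi a b j"
    and k: "sum (lo sp a b) {a..b} \<le> k" "k \<le> sum (hi a b) {a..b}" "3 \<le> k"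
  shows "\<exists>c. valid c a b \<and> length (W c a b) = k \<and> is_cycle Vp Ep (W c a b) \<and>
     (a \<le> sp \<and> sp \<le> b \<longrightarrow> (sp = a \<or> sp = b \<longrightarrow> 2 \<le> c sp) \<and> (a < sp \<and> sp < b \<longrightarrow> 3 \<le> c sp))"
proof -
  obtain c where c: "\<forall>j\<in>{a..b}. lo sp a b j \<le> c j \<and> c j \<le> hi a b j" "sum c {a..b} = k"
    using fill[of "{a..b}" "lo sp a b" "hi a b" k] lh k by auto
  have v: "valid c a b" unfolding valid_def
  proof (intro conjI allI impI)
    show "a < b" "b \<le> D" using ab by auto
    have ca: "lo sp a b a \<le> c a \<and> c a \<le> hi a b a" using c(1) ab by auto
    have cb: "lo sp a b b \<le> c b \<and> c b \<le> hi a b b" using c(1) ab by auto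
    show "1 \<le> c a" "c a \<le> (if big a then sz a else 1)" using ca by (auto simp: lo_def hi_def)
    show "1 \<le> c b" "c b \<le> (if big b then sz b else 1)" using cb by (auto simp: lo_def hi_def)
    fix j assume j: "a < j \<and> j < b"
    then have cj: "lo sp a b j \<le> c j \<and> c j \<le> hi a b j" using c(1) by auto
    show "2 \<le> c j" "c j \<le> sz j" using cj j by (auto simp: lo_def hi_def split: if_splits)
  next
    show "3 \<le> sum c {a..b}" using c k by simp
  qed
  have "a \<le> sp \<and> sp \<le> b \<longrightarrow> (sp = a \<or> sp = b \<longrightarrow> 2 \<le> c sp) \<and> (a < sp \<and> sp < b \<longrightarrow> 3 \<le> c sp)"
  proof (rule impI)
    assume sp: "a \<le> sp \<and> sp \<le> b"
    then have csp: "lo sp a b sp \<le> c sp" using c(1) by auto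
    show "(sp = a \<or> sp = b \<longrightarrow> 2 \<le> c sp) \<and> (a < sp \<and> sp < b \<longrightarrow> 3 \<le> c sp)"
      using csp by (auto simp: lo_def)
  qed
  then show ?thesis using v W_len[OF v] W_cycle[OF v] c by auto
qed

definition nn :: nat where "nn = sum sz {0..D}"

lemma hi_full: "sum (hi 0 D) {0..D} = nn"
  unfolding nn_def hi_def using big0 bigD by (intro sum.cong) auto

lemma lo_le_hi:
  assumes "a < b" "b \<le> D" "a \<le> sp \<and> sp \<le> b \<longrightarrow> big sp \<and> 2 \<le> sz sp"
  shows "\<forall>j\<in>{a..b}. lo sp a b j \<le> hi a b j"
proof
  fix j assume j: "j \<in> {a..b}"
  show "lo sp a b j \<le> hi a b j"
  proof (cases "j = a \<or> j = b")
    case True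
    then show ?thesis using assms j sz_pos[of j] by (auto simp: lo_def hi_def)
  next
    case False
    then have j': "0 < j" "j < D" using j assms by auto
    then show ?thesis using assms j False mid2[OF j'] bigmid[OF j'] by (auto simp: lo_def hi_def)
  qed
qed

lemma good_slack:
  assumes "good D sz big j" "a \<le> j" "j \<le> b" "a < b" "b \<le> D" "j \<noteq> sp"
  shows "lo sp a b j < hi a b j"
proof (cases "j = a \<or> j = b")
  case True
  have "2 \<le> sz j" using assms(1) unfolding good_def by (auto split: if_splits)
  then show ?thesis using True assms unfolding good_def by (auto simp: lo_def hi_def)
next
  case False
  then have "j \<noteq> 0" "j \<noteq> D" using assms by auto
  then have "3 \<le> sz j" using assms(1) unfolding good_def by auto
  then show ?thesis using False assms by (auto simp: lo_def hi_def)
qed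

lemma chain:
  fixes A B :: "nat \<Rightarrow> nat"
  assumes win: "\<forall>t\<le>T. A t < B t \<and> B t \<le> D \<and> B t - A t = Suc t \<and> ((A t \<le> sp \<and> sp \<le> B t) = s)"
    and lh: "\<forall>t\<le>T. \<forall>j\<in>{A t..B t}. lo sp (A t) (B t) j \<le> hi (A t) (B t) j"
    and slack: "\<forall>t<T. \<exists>j\<in>{A t..B t}. lo sp (A t) (B t) j < hi (A t) (B t) j"
    and fin: "A T = 0" "B T = D"
    and k: "3 \<le> k" "k \<le> nn"
  shows "\<exists>t\<le>T. sum (lo sp (A t) (B t)) {A t..B t} \<le> k \<and> k \<le> sum (hi (A t) (B t)) {A t..B t}"
proof -
  define mm where "mm t = sum (lo sp (A t) (B t)) {A t..B t}" for t
  define MM where "MM t = sum (hi (A t) (B t)) {A t..B t}" for t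
  have mmv: "mm t = 2 * Suc t + (if s then 1 else 0)" if "t \<le> T" for t
    using sum_lo[of "A t" "B t" sp] win that unfolding mm_def by auto
  have step: "\<forall>t<T. mm (Suc t) \<le> MM t + 1"
  proof (intro allI impI)
    fix t assume t: "t < T"
    have "mm t < MM t" unfolding mm_def MM_def
      by (rule sum_strict_mono_ex1) (use lh slack t in auto)
    moreover have "mm (Suc t) = mm t + 2" using mmv[of t] mmv[of "Suc t"] t by simp
    ultimately show "mm (Suc t) \<le> MM t + 1" by simp
  qed
  have m0: "mm 0 \<le> 3" using mmv[of 0] by simp
  have "MM T = nn" unfolding MM_def fin by (rule hi_full)
  then have "\<exists>t\<le>T. mm t \<le> k \<and> k \<le> MM t" using chain_cover[of mm T MM k, OF m0 step] k by simp
  then show ?thesis unfolding mm_def MM_def .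
qed

lemma cross_cycles:
  assumes i: "i < D" and k: "3 \<le> k" "k \<le> nn"
  shows "\<exists>cs. is_cycle Vp Ep cs \<and> length cs = k \<and> (\<exists>p q. fst p = i \<and> fst q = Suc i \<and> edge_on_cycle p q cs)"
proof -
  define A where "A t = i - (t - (D - Suc i))" for t
  define B where "B t = min D (Suc i + t)" for t
  define T where "T = D - 1"
  have win0: "A t \<le> i \<and> Suc i \<le> B t \<and> A t < B t \<and> B t \<le> D \<and> B t - A t = Suc t" if "t \<le> T" for t
    using that i unfolding A_def B_def T_def by auto
  have win: "\<forall>t\<le>T. A t < B t \<and> B t \<le> D \<and> B t - A t = Suc t \<and> ((A t \<le> Suc D \<and> Suc D \<le> B t) = False)"
    using win0 by fastforce
  have lh: "\<forall>t\<le>T. \<forall>j\<in>{A t..B t}. lo (Suc D) (A t) (B t) j \<le> hi (A t) (B t) j"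
    using win0 lo_le_hi by fastforce
  have slack: "\<forall>t<T. \<exists>j\<in>{A t..B t}. lo (Suc D) (A t) (B t) j < hi (A t) (B t) j"
  proof (intro allI impI)
    fix t assume t: "t < T"
    have w: "A t \<le> i" "Suc i \<le> B t" "A t < B t" "B t \<le> D" using win0[of t] t by auto
    from pair_good[OF i] show "\<exists>j\<in>{A t..B t}. lo (Suc D) (A t) (B t) j < hi (A t) (B t) j"
    proof
      assume "good D sz big i"
      then show ?thesis using good_slack[of i "A t" "B t" "Suc D"] w by (intro bexI[of _ i]) auto
    next
      assume "good D sz big (Suc i)"
      then show ?thesis using good_slack[of "Suc i" "A t" "B t" "Suc D"] w by (intro bexI[of _ "Suc i"]) auto
    qed
  qed
  have fin: "A T = 0" "B T = D" using i unfolding A_def B_def T_def by auto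
  obtain t where t: "t \<le> T" "sum (lo (Suc D) (A t) (B t)) {A t..B t} \<le> k" "k \<le> sum (hi (A t) (B t)) {A t..B t}"
    using chain[OF win lh slack fin k] by auto
  have w: "A t \<le> i" "Suc i \<le> B t" "A t < B t" "B t \<le> D" using win0[OF t(1)] by auto
  obtain c where c: "valid c (A t) (B t)" "length (W c (A t) (B t)) = k" "is_cycle Vp Ep (W c (A t) (B t))"
    using window_cycle[OF w(3,4)] lh t k by blast
  show ?thesis using c W_cross[OF c(1) w(1,2)] by blast
qed

lemma clique_cycles:
  assumes i: "1 \<le> i" "i \<le> D" "big i" "2 \<le> sz i" and k: "3 \<le> k" "k \<le> nn"
  shows "\<exists>cs. is_cycle Vp Ep cs \<and> length cs = k \<and> (\<exists>p q. p \<noteq> q \<and> fst p = i \<and> fst q = i \<and> edge_on_cycle p q cs)"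
proof -
  define T where "T = D - 1"
  have lhp: "a \<le> i \<and> i \<le> b \<longrightarrow> big i \<and> 2 \<le> sz i" for a b using i by auto
  have "\<exists>A B. (\<forall>t\<le>T. A t \<le> i \<and> i \<le> B t \<and> A t < B t \<and> B t \<le> D \<and> B t - A t = Suc t) \<and>
      (\<forall>t<T. \<exists>j\<in>{A t..B t}. lo i (A t) (B t) j < hi (A t) (B t) j) \<and> A T = 0 \<and> B T = D"
  proof (cases "Suc (Suc i) \<le> D")
    case True
    define A where "A t = i - (t - (D - Suc i))" for t
    define B where "B t = min D (Suc i + t)" for t
    have win0: "A t \<le> i \<and> i \<le> B t \<and> A t < B t \<and> B t \<le> D \<and> B t - A t = Suc t" if "t \<le> T" for t
      using that True unfolding A_def B_def T_def by auto
    have i3: "3 \<le> sz i" using bigmid[of i] i True by simp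
    have slack: "\<forall>t<T. \<exists>j\<in>{A t..B t}. lo i (A t) (B t) j < hi (A t) (B t) j"
    proof (intro allI impI)
      fix t assume t: "t < T"
      show "\<exists>j\<in>{A t..B t}. lo i (A t) (B t) j < hi (A t) (B t) j"
      proof (cases "t \<le> D - Suc i")
        case True
        then have "A t = i" unfolding A_def by simp
        then show ?thesis using i3 i win0[of t] t by (intro bexI[of _ i]) (auto simp: lo_def hi_def)
      next
        case False
        then have BD: "B t = D" unfolding B_def by simp
        have w: "A t \<le> i" "A t < B t" using win0[of t] t by auto
        have "Suc i < D" using True by simp
        from pair_good[OF this] show ?thesis
        proof
          assume "good D sz big (Suc i)"
          then show ?thesis using good_slack[of "Suc i" "A t" "B t" i] w BD True
            by (intro bexI[of _ "Suc i"]) auto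
        next
          assume "good D sz big (Suc (Suc i))"
          then show ?thesis using good_slack[of "Suc (Suc i)" "A t" "B t" i] w BD True
            by (intro bexI[of _ "Suc (Suc i)"]) auto
        qed
      qed
    qed
    have fin: "A T = 0" "B T = D" using True unfolding A_def B_def T_def by auto
    show ?thesis using win0 slack fin by blast
  next
    case False
    define A where "A t = i - Suc t" for t
    define B where "B t = max i (Suc t)" for t
    have win0: "A t \<le> i \<and> i \<le> B t \<and> A t < B t \<and> B t \<le> D \<and> B t - A t = Suc t" if "t \<le> T" for t
      using that False i unfolding A_def B_def T_def by auto
    have slack: "\<forall>t<T. \<exists>j\<in>{A t..B t}. lo i (A t) (B t) j < hi (A t) (B t) j"
    proof (intro allI impI)
      fix t assume t: "t < T"
      then have "2 \<le> D" unfolding T_def by simp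
      then have "i \<noteq> D" using szD i by auto
      then have i3: "3 \<le> sz i" using bigmid[of i] i by simp
      have "B t = i" using t False unfolding B_def T_def by auto
      then show "\<exists>j\<in>{A t..B t}. lo i (A t) (B t) j < hi (A t) (B t) j"
        using i3 i win0[of t] t by (intro bexI[of _ i]) (auto simp: lo_def hi_def)
    qed
    have fin: "A T = 0" "B T = D" using False i unfolding A_def B_def T_def by auto
    show ?thesis using win0 slack fin by blast
  qed
  then obtain A B where AB: "\<forall>t\<le>T. A t \<le> i \<and> i \<le> B t \<and> A t < B t \<and> B t \<le> D \<and> B t - A t = Suc t"
      "\<forall>t<T. \<exists>j\<in>{A t..B t}. lo i (A t) (B t) j < hi (A t) (B t) j" "A T = 0" "B T = D" by blast
  have win: "\<forall>t\<le>T. A t < B t \<and> B t \<le> D \<and> B t - A t = Suc t \<and> ((A t \<le> i \<and> i \<le> B t) = True)"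
    using AB(1) by auto
  have lh: "\<forall>t\<le>T. \<forall>j\<in>{A t..B t}. lo i (A t) (B t) j \<le> hi (A t) (B t) j"
    using AB(1) lo_le_hi lhp by blast
  obtain t where t: "t \<le> T" "sum (lo i (A t) (B t)) {A t..B t} \<le> k" "k \<le> sum (hi (A t) (B t)) {A t..B t}"
    using chain[OF win lh AB(2) AB(3,4) k] by auto
  have w: "A t \<le> i" "i \<le> B t" "A t < B t" "B t \<le> D" using AB(1) t(1) by auto
  obtain c where c: "valid c (A t) (B t)" "length (W c (A t) (B t)) = k" "is_cycle Vp Ep (W c (A t) (B t))"
      "(i = A t \<or> i = B t \<longrightarrow> 2 \<le> c i) \<and> (A t < i \<and> i < B t \<longrightarrow> 3 \<le> c i)"
    using window_cycle[OF w(3,4)] lh t k w by blast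
  have "\<exists>p q. p \<noteq> q \<and> fst p = i \<and> fst q = i \<and> edge_on_cycle p q (W c (A t) (B t))"
  proof (cases "i = A t")
    case True
    then show ?thesis using W_clique_a[OF c(1)] c(4) by (intro exI[of _ "(i, 0)"] exI[of _ "(i, 1)"]) auto
  next
    case F1: False
    show ?thesis
    proof (cases "i = B t")
      case True
      then show ?thesis using W_clique_b[OF c(1)] c(4) by (intro exI[of _ "(i, 0)"] exI[of _ "(i, 1)"]) auto
    next
      case False
      then have "A t < i" "i < B t" using F1 w by auto
      then show ?thesis using W_clique_mid[OF c(1)] c(4) by (intro exI[of _ "(i, 0)"] exI[of _ "(i, 2)"]) auto
    qed
  qed
  then show ?thesis using c by blast
qed

end

lemma cycle_map:
  assumes "inj f" "\<forall>x\<in>V. f x \<in> V'" "\<forall>x y. E x y \<longrightarrow> E' (f x) (f y)" "is_cycle V E cs"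
  shows "is_cycle V' E' (map f cs)"
proof -
  have c: "3 \<le> length cs" "distinct cs" "set cs \<subseteq> V" "\<forall>i<length cs. E (cs ! i) (cs ! ((i + 1) mod length cs))"
    using assms(4) unfolding is_cycle_def by auto
  have "\<forall>i<length (map f cs). E' (map f cs ! i) (map f cs ! ((i + 1) mod length (map f cs)))"
  proof (intro allI impI)
    fix i assume i: "i < length (map f cs)"
    then have i': "i < length cs" "(i + 1) mod length cs < length cs" by (auto intro!: mod_less_divisor)
    then show "E' (map f cs ! i) (map f cs ! ((i + 1) mod length (map f cs)))"
      using c(4) assms(3) by simp
  qed
  moreover have "distinct (map f cs)" using c(2) assms(1) by (simp add: distinct_map inj_on_def inj_def)
  moreover have "set (map f cs) \<subseteq> V'" using c(3) assms(2) by auto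
  ultimately show ?thesis using c(1) unfolding is_cycle_def by simp
qed

lemma edge_map: "edge_on_cycle p q cs \<Longrightarrow> edge_on_cycle (f p) (f q) (map f cs)"
  unfolding edge_on_cycle_def
proof -
  assume "\<exists>i<length cs. {cs ! i, cs ! ((i + 1) mod length cs)} = {p, q}"
  then obtain i where i: "i < length cs" "{cs ! i, cs ! ((i + 1) mod length cs)} = {p, q}" by blast
  have "(i + 1) mod length cs < length cs" using i by (intro mod_less_divisor) (cases cs, auto)
  then have "{map f cs ! i, map f cs ! ((i + 1) mod length (map f cs))} = f ` {cs ! i, cs ! ((i + 1) mod length cs)}"
    using i(1) by simp
  also have "\<dots> = {f p, f q}" using i(2) by (metis image_empty image_insert)
  finally show "\<exists>i<length (map f cs). {map f cs ! i, map f cs ! ((i + 1) mod length (map f cs))} = {f p, f q}"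
    using i by (intro exI[of _ i]) auto
qed

lemma edge_sym: "edge_on_cycle p q cs \<longleftrightarrow> edge_on_cycle q p cs"
  unfolding edge_on_cycle_def by (simp add: insert_commute)

lemma edge_in_set: "edge_on_cycle p q cs \<Longrightarrow> p \<in> set cs \<and> q \<in> set cs"
proof -
  assume "edge_on_cycle p q cs"
  then obtain i where i: "i < length cs" "{cs ! i, cs ! ((i + 1) mod length cs)} = {p, q}"
    unfolding edge_on_cycle_def by blast
  have "(i + 1) mod length cs < length cs" using i by (intro mod_less_divisor) (cases cs, auto)
  then have s: "{cs ! i, cs ! ((i + 1) mod length cs)} \<subseteq> set cs" using i(1) by auto
  have "p \<in> {cs ! i, cs ! ((i + 1) mod length cs)}" "q \<in> {cs ! i, cs ! ((i + 1) mod length cs)}"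
    using i(2) by auto
  then show ?thesis using s by blast
qed

definition sw :: "'a \<Rightarrow> 'a \<Rightarrow> 'a \<Rightarrow> 'a" where
  "sw a b v = (if v = a then b else if v = b then a else v)"

lemma inj_sw: "inj (sw a b)"
  unfolding inj_def sw_def by auto

context blowup
begin

lemma sw_ok:
  assumes "a \<in> Vp" "b \<in> Vp" "fst a = fst b"
  shows "\<forall>x\<in>Vp. sw a b x \<in> Vp" "\<forall>x y. Ep x y \<longrightarrow> Ep (sw a b x) (sw a b y)"
proof -
  have fs: "fst (sw a b x) = fst x" for x using assms unfolding sw_def by auto
  show "\<forall>x\<in>Vp. sw a b x \<in> Vp" using assms unfolding sw_def by auto
  then show "\<forall>x y. Ep x y \<longrightarrow> Ep (sw a b x) (sw a b y)"
    using fs inj_sw[of a b] unfolding Ep_def inj_def by metis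
qed

lemma sw_cycle:
  assumes "a \<in> Vp" "b \<in> Vp" "fst a = fst b" "is_cycle Vp Ep cs"
  shows "is_cycle Vp Ep (map (sw a b) cs)"
  using cycle_map[OF inj_sw sw_ok[OF assms(1-3)] assms(4)] .

lemma cyc_in_V: "is_cycle Vp Ep cs \<Longrightarrow> x \<in> set cs \<Longrightarrow> x \<in> Vp"
  unfolding is_cycle_def by auto

lemma card_Vp: "card Vp = nn"
proof -
  have "Vp = (SIGMA j:{0..D}. {0..<sz j})" unfolding Vp_def by auto
  then show ?thesis unfolding nn_def by simp
qed

lemma fin_Vp: "finite Vp"
proof -
  have "Vp = (SIGMA j:{0..D}. {0..<sz j})" unfolding Vp_def by auto
  then show ?thesis by simp
qed

lemma sg_p: "simple_graph Vp Ep"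
  unfolding simple_graph_def using fin_Vp by (auto simp: Ep_def)

lemma ep_p: "edge_pancyclic Vp Ep"
  unfolding edge_pancyclic_def
proof (intro allI impI)
  fix k u v assume k: "3 \<le> k \<and> k \<le> card Vp" and uv: "Ep u v"
  have kn: "3 \<le> k" "k \<le> nn" using k card_Vp by auto
  have uV: "u \<in> Vp" "v \<in> Vp" "u \<noteq> v" using uv unfolding Ep_def by auto
  have cross: "\<exists>cs. is_cycle Vp Ep cs \<and> length cs = k \<and> edge_on_cycle x y cs"
    if xy: "x \<in> Vp" "y \<in> Vp" "Suc (fst x) = fst y" for x y
  proof -
    have "fst x < D" using xy unfolding Vp_def by auto
    from cross_cycles[OF this kn] obtain cs p q where
      cs: "is_cycle Vp Ep cs" "length cs = k" "fst p = fst x" "fst q = Suc (fst x)" "edge_on_cycle p q cs"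
      by blast
    have pq: "p \<in> Vp" "q \<in> Vp" using edge_in_set[OF cs(5)] cyc_in_V[OF cs(1)] by auto
    define cs1 where "cs1 = map (sw x p) cs"
    have c1: "is_cycle Vp Ep cs1" unfolding cs1_def by (rule sw_cycle) (use xy pq cs in auto)
    have "q \<noteq> x" "q \<noteq> p" using cs by auto
    then have s1: "sw x p p = x" "sw x p q = q" unfolding sw_def by auto
    have e1: "edge_on_cycle x q cs1" unfolding cs1_def using edge_map[OF cs(5), of "sw x p"]
      unfolding s1 .
    define cs2 where "cs2 = map (sw y q) cs1"
    have c2: "is_cycle Vp Ep cs2" unfolding cs2_def by (rule sw_cycle) (use xy pq cs c1 in auto)
    have "x \<noteq> y" "x \<noteq> q" using xy cs by auto
    then have s2: "sw y q x = x" "sw y q q = y" unfolding sw_def by auto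
    have e2: "edge_on_cycle x y cs2" unfolding cs2_def using edge_map[OF e1, of "sw y q"]
      unfolding s2 .
    show ?thesis using c2 e2 cs(2) unfolding cs2_def cs1_def by auto
  qed
  have lay: "Suc (fst u) = fst v \<or> Suc (fst v) = fst u \<or> (fst u = fst v \<and> big (fst u))"
    using uv unfolding Ep_def by auto
  then show "\<exists>cs. is_cycle Vp Ep cs \<and> length cs = k \<and> edge_on_cycle u v cs"
  proof (elim disjE)
    assume h: "Suc (fst u) = fst v"
    show ?thesis by (rule cross[OF uV(1) uV(2) h])
  next
    assume h: "Suc (fst v) = fst u"
    obtain cs where "is_cycle Vp Ep cs" "length cs = k" "edge_on_cycle v u cs"
      using cross[OF uV(2) uV(1) h] by blast
    then show ?thesis using edge_sym[of v u cs] by blast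
  next
    assume l: "fst u = fst v \<and> big (fst u)"
    define i where "i = fst u"
    have "snd u \<noteq> snd v" using l uV by (metis prod.expand)
    then have sz2: "2 \<le> sz i" using uV l unfolding Vp_def i_def by auto
    have iD: "i \<le> D" using uV unfolding Vp_def i_def by auto
    have i1: "1 \<le> i" using sz2 sz0 by (cases i) auto
    from clique_cycles[OF i1 iD _ sz2 kn] l obtain cs p q where
      cs: "is_cycle Vp Ep cs" "length cs = k" "p \<noteq> q" "fst p = i" "fst q = i" "edge_on_cycle p q cs"
      unfolding i_def by blast
    have pq: "p \<in> Vp" "q \<in> Vp" using edge_in_set[OF cs(6)] cyc_in_V[OF cs(1)] by auto
    define cs1 where "cs1 = map (sw u p) cs"
    have c1: "is_cycle Vp Ep cs1" unfolding cs1_def by (rule sw_cycle) (use uV pq cs i_def in auto)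
    define q' where "q' = sw u p q"
    have s1: "sw u p p = u" unfolding sw_def by auto
    have e1: "edge_on_cycle u q' cs1" unfolding cs1_def q'_def using edge_map[OF cs(6), of "sw u p"]
      unfolding s1 .
    have q'V: "q' \<in> Vp" "fst q' = i" using pq uV cs i_def unfolding q'_def sw_def by auto
    have "q' \<noteq> u" using cs(3) unfolding q'_def sw_def by auto
    define cs2 where "cs2 = map (sw v q') cs1"
    have c2: "is_cycle Vp Ep cs2" unfolding cs2_def by (rule sw_cycle) (use uV q'V c1 l i_def in auto)
    have s2: "sw v q' u = u" "sw v q' q' = v" using \<open>q' \<noteq> u\<close> uV unfolding sw_def by auto
    have e2: "edge_on_cycle u v cs2" unfolding cs2_def using edge_map[OF e1, of "sw v q'"]
      unfolding s2 .
    show ?thesis using c2 e2 cs(2) unfolding cs2_def cs1_def by auto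
  qed
qed

definition Vn :: "nat set" where "Vn = prod_encode ` Vp"
definition En :: "nat \<Rightarrow> nat \<Rightarrow> bool" where "En u v \<longleftrightarrow> Ep (prod_decode u) (prod_decode v)"

lemma sg_n: "simple_graph Vn En"
  unfolding simple_graph_def
proof (intro conjI allI impI)
  show "finite Vn" unfolding Vn_def using fin_Vp by simp
  fix u v assume uv: "En u v"
  then have e: "Ep (prod_decode u) (prod_decode v)" unfolding En_def .
  have "prod_decode u \<in> Vp" "prod_decode v \<in> Vp" using e unfolding Ep_def by auto
  then show "u \<in> Vn" "v \<in> Vn" unfolding Vn_def by (metis imageI prod_decode_inverse)+
  show "u \<noteq> v" using e unfolding Ep_def by auto
  show "En v u" using Ep_sym[OF e] unfolding En_def .
qed

lemma card_n: "card Vn = nn"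
  unfolding Vn_def using card_Vp by (simp add: card_image inj_prod_encode)

lemma ep_n: "edge_pancyclic Vn En"
  unfolding edge_pancyclic_def
proof (intro allI impI)
  fix k u v assume k: "3 \<le> k \<and> k \<le> card Vn" and uv: "En u v"
  have "k \<le> card Vp" using k card_n card_Vp by simp
  then obtain cs where cs: "is_cycle Vp Ep cs" "length cs = k" "edge_on_cycle (prod_decode u) (prod_decode v) cs"
    using ep_p uv k unfolding edge_pancyclic_def En_def by blast
  have "is_cycle Vn En (map prod_encode cs)"
    by (rule cycle_map[OF _ _ _ cs(1)]) (auto simp: inj_prod_encode Vn_def En_def)
  moreover have "edge_on_cycle u v (map prod_encode cs)" using edge_map[OF cs(3), of prod_encode] by simp
  ultimately show "\<exists>cs. is_cycle Vn En cs \<and> length cs = k \<and> edge_on_cycle u v cs" using cs(2) by auto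
qed

lemma edge_n: "En (prod_encode (0, 0)) (prod_encode (1, 0))"
  unfolding En_def Ep_def Vp_def using D1 sz_pos[of 0] sz_pos[of 1] by auto

lemma walk_lay:
  assumes "walk Vn En xs" "hd xs = prod_encode (0, 0)"
  shows "t < length xs \<Longrightarrow> fst (prod_decode (xs ! t)) \<le> t"
proof (induction t)
  case 0 then show ?case using assms by (cases xs) auto
next
  case (Suc t)
  then have "En (xs ! t) (xs ! Suc t)" using assms(1) unfolding walk_def by auto
  then have "fst (prod_decode (xs ! Suc t)) \<le> Suc (fst (prod_decode (xs ! t)))"
    unfolding En_def using Ep_lay by blast
  then show ?case using Suc by simp
qed

lemma diam_ge: "enat D \<le> diameter Vn En"
proof -
  let ?x = "prod_encode (0, 0)" and ?y = "prod_encode (D, 0)"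
  have xV: "?x \<in> Vn" and yV: "?y \<in> Vn" unfolding Vn_def Vp_def using sz_pos[of 0] sz_pos[of D] by auto
  have "enat D \<le> gdist Vn En ?x ?y" unfolding gdist_def
  proof (rule INF_greatest)
    fix xs assume xs: "xs \<in> {xs. walk Vn En xs \<and> hd xs = ?x \<and> last xs = ?y}"
    then have ne: "xs \<noteq> []" by (auto simp: walk_def)
    have "fst (prod_decode (xs ! (length xs - 1))) \<le> length xs - 1"
      using walk_lay[of xs "length xs - 1"] xs ne by auto
    moreover have "xs ! (length xs - 1) = ?y" using xs ne by (simp add: last_conv_nth)
    ultimately show "enat D \<le> enat (length xs - 1)" by simp
  qed
  also have "\<dots> \<le> diameter Vn En" unfolding diameter_def
    using xV yV by (intro SUP_upper2[OF xV] SUP_upper2[OF yV]) simp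
  finally show ?thesis .
qed

end

lemma sum_g: "(\<Sum>j<m. (if odd j then 3 else 2::nat)) = 2 * m + m div 2"
proof (induction m)
  case 0 then show ?case by simp
next
  case (Suc m)
  have "(\<Sum>j<Suc m. (if odd j then 3 else 2::nat)) = 2 * m + m div 2 + (if odd m then 3 else 2)"
    using Suc by simp
  also have "\<dots> = 2 * Suc m + Suc m div 2" by presburger
  finally show ?case .
qed

lemma family_sum:
  fixes D :: nat
  assumes "2 \<le> D"
  shows "(\<Sum>j\<in>{2..<D}. (if odd j \<or> Suc j = D then 3 else 2::nat)) + 5 = 2 * D + (D + 1) div 2"
proof -
  let ?g = "\<lambda>j. (if odd j then 3 else 2::nat)"
  have split: "(\<Sum>j\<in>{2..<D}. (if odd j \<or> Suc j = D then 3 else 2::nat)) =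
      (\<Sum>j\<in>{2..<D}. ?g j + (if j = D - 1 \<and> even j then 1 else 0))"
    by (intro sum.cong) auto
  also have "\<dots> = (\<Sum>j\<in>{2..<D}. ?g j) + (\<Sum>j\<in>{2..<D}. if j = D - 1 \<and> even j then 1 else 0)"
    by (rule sum.distrib)
  also have "(\<Sum>j\<in>{2..<D}. if j = D - 1 \<and> even j then 1 else (0::nat)) = (if odd D then 1 else 0)"
  proof -
    have "(\<Sum>j\<in>{2..<D}. if j = D - 1 \<and> even j then 1 else (0::nat)) =
        (\<Sum>j\<in>{2..<D}. if j = D - 1 then (if even j then 1 else 0) else 0)"
      by (intro sum.cong) auto
    also have "\<dots> = (if D - 1 \<in> {2..<D} then (if even (D - 1) then 1 else 0) else 0)"
      by (simp add: sum.delta')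
    also have "\<dots> = (if odd D then 1 else 0)"
    proof (cases "D = 2")
      case True then show ?thesis by simp
    next
      case False
      then have "D - 1 \<in> {2..<D}" using assms by auto
      moreover have "even (D - 1) \<longleftrightarrow> odd D" using assms by presburger
      ultimately show ?thesis by simp
    qed
    finally show ?thesis .
  qed
  also have "(\<Sum>j\<in>{2..<D}. ?g j) + 5 = (\<Sum>j<D. ?g j)"
  proof -
    have "{..<D} = {0, 1} \<union> {2..<D}" using assms by auto
    then have "(\<Sum>j<D. ?g j) = (\<Sum>j\<in>{0,1}. ?g j) + (\<Sum>j\<in>{2..<D}. ?g j)"
      by (simp add: sum.union_disjoint)
    then show ?thesis by simp
  qed
  then have "(\<Sum>j\<in>{2..<D}. ?g j) + 5 = 2 * D + D div 2" using sum_g[of D] by simp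
  ultimately show ?thesis by presburger
qed


theorem theorem6:
  fixes n :: nat
  assumes "n \<ge> 3"
  shows "(\<forall>(V :: 'a set) E. simple_graph V E \<and> card V = n \<and> (\<exists>u v. E u v) \<and> edge_pancyclic V E
            \<longrightarrow> diameter V E \<le> enat (2 * n div 5))
       \<and> (\<exists>(V :: nat set) E. simple_graph V E \<and> card V = n \<and> (\<exists>u v. E u v) \<and> edge_pancyclic V E
            \<and> diameter V E = enat (2 * n div 5))"
proof
  show "\<forall>(V :: 'a set) E. simple_graph V E \<and> card V = n \<and> (\<exists>u v. E u v) \<and> edge_pancyclic V E
            \<longrightarrow> diameter V E \<le> enat (2 * n div 5)"
  proof (intro allI impI)
    fix V :: "'a set" and E
    assume h: "simple_graph V E \<and> card V = n \<and> (\<exists>u v. E u v) \<and> edge_pancyclic V E"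
    then obtain u v where "E u v" by blast
    then show "diameter V E \<le> enat (2 * n div 5)" using part1[of V E n u v] h assms by blast
  qed
next
  define D where "D = 2 * n div 5"
  define nb where "nb = 2 * D + (D + 1) div 2"
  define bigf where "bigf j \<longleftrightarrow> (j = 0 \<or> j = D \<or> odd j \<or> Suc j = D)" for j
  define szf where "szf j = (if j = 0 then 1 else if j = D then (if D = 1 then n - 1 else 1)
      else if j = 1 then n + 3 - nb else if bigf j then 3 else (2::nat))" for j
  have D1: "1 \<le> D" using assms unfolding D_def by simp
  have nbn: "nb \<le> n" if "2 \<le> D" using that unfolding nb_def D_def by presburger
  have sz1: "3 \<le> szf 1" if "2 \<le> D" using nbn[OF that] that unfolding szf_def by simp
  interpret B: blowup D szf bigf
  proof
    show "1 \<le> D" by (rule D1)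
    show "1 \<le> szf j" if "j \<le> D" for j
    proof -
      have "j = 1 \<Longrightarrow> j \<noteq> D \<Longrightarrow> 3 \<le> szf j" using sz1 D1 by auto
      then show ?thesis using assms unfolding szf_def by (auto split: if_splits)
    qed
    show "szf 0 = 1" unfolding szf_def by simp
    show "2 \<le> szf j" if "0 < j" "j < D" for j
      using that sz1 unfolding szf_def by (cases "j = 1") auto
    show "szf j \<le> 2" if "j \<le> D" "\<not> bigf j" for j
      using that unfolding szf_def bigf_def by auto
    show "bigf 0" "bigf D" unfolding bigf_def by auto
    show "3 \<le> szf j" if "0 < j" "j < D" "bigf j" for j
      using that sz1 unfolding szf_def by (cases "j = 1") auto
    show "szf D = 1" if "2 \<le> D" using that unfolding szf_def by simp
    show "good D szf bigf i \<or> good D szf bigf (Suc i)" if i: "i < D" for i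
    proof (cases "i = 0")
      case True
      show ?thesis
      proof (cases "D = 1")
        case True
        then have "good D szf bigf (Suc i)" using \<open>i = 0\<close> assms
          unfolding good_def bigf_def szf_def by simp
        then show ?thesis by simp
      next
        case False
        then have "2 \<le> D" using D1 by simp
        then have "good D szf bigf (Suc i)" using \<open>i = 0\<close> sz1
          unfolding good_def bigf_def by simp
        then show ?thesis by simp
      qed
    next
      case False
      show ?thesis
      proof (cases "odd i")
        case True
        have "3 \<le> szf i"
        proof (cases "i = 1")
          case True then show ?thesis using sz1 i by simp
        next
          case False then show ?thesis using \<open>i \<noteq> 0\<close> i \<open>odd i\<close> unfolding szf_def bigf_def by simp
        qed
        then have "good D szf bigf i" using True i \<open>i \<noteq> 0\<close> unfolding good_def bigf_def by simp
        then show ?thesis by simp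
      next
        case ev: False
        then have i1: "i \<noteq> 1" by auto
        show ?thesis
        proof (cases "Suc i = D")
          case True
          then have "good D szf bigf i" using \<open>i \<noteq> 0\<close> i i1
            unfolding good_def bigf_def szf_def by simp
          then show ?thesis by simp
        next
          case False
          then have "Suc i < D" using i by simp
          then have "good D szf bigf (Suc i)" using \<open>i \<noteq> 0\<close> ev
            unfolding good_def bigf_def szf_def by simp
          then show ?thesis by simp
        qed
      qed
    qed
  qed
  have nn: "B.nn = n"
  proof (cases "D = 1")
    case True
    have "B.nn = sum szf {0..D}" by (rule B.nn_def)
    also have "\<dots> = szf 0 + szf 1" using True by (simp add: atLeast0_atMost_Suc)
    finally have "B.nn = szf 0 + szf 1" .
    then show ?thesis using True assms unfolding szf_def by simp
  next
    case False
    then have D2: "2 \<le> D" using D1 by simp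
    have e: "{0..D} = {0, 1, D} \<union> {2..<D}" using D2 by auto
    have "B.nn = sum szf ({0, 1, D} \<union> {2..<D})" using B.nn_def e by simp
    also have "\<dots> = (\<Sum>j\<in>{0, 1, D}. szf j) + (\<Sum>j\<in>{2..<D}. szf j)"
      by (rule sum.union_disjoint) auto
    also have "(\<Sum>j\<in>{0, 1, D}. szf j) = 1 + (n + 3 - nb) + 1"
      using D2 unfolding szf_def by simp
    also have "(\<Sum>j\<in>{2..<D}. szf j) = (\<Sum>j\<in>{2..<D}. (if odd j \<or> Suc j = D then 3 else 2::nat))"
      unfolding szf_def bigf_def by (intro sum.cong) auto
    finally show ?thesis using family_sum[OF D2] nbn[OF D2] unfolding nb_def by simp
  qed
  have dle: "diameter B.Vn B.En \<le> enat (2 * n div 5)"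
    using part1[OF B.sg_n _ assms B.ep_n B.edge_n] B.card_n nn by simp
  have dge: "enat (2 * n div 5) \<le> diameter B.Vn B.En" using B.diam_ge unfolding D_def .
  show "\<exists>(V :: nat set) E. simple_graph V E \<and> card V = n \<and> (\<exists>u v. E u v) \<and> edge_pancyclic V E
            \<and> diameter V E = enat (2 * n div 5)"
    using B.sg_n B.card_n nn B.edge_n B.ep_n dle dge by (intro exI[of _ B.Vn] exI[of _ B.En]) auto
qed

end
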